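(* Let $\varphi$ be a metric-compatible function and $T\in\mathrm{Aut}(X,\mu)$ aperiodic. Then $[T]_\varphi$ is a subgroup of $\mathrm{Aut}(X,\mu)$, and $d_{\varphi,T}$ restricted to $[T]_\varphi$ is a complete, separable, right-invariant metric (i.e. $d_{\varphi,T}(UW,VW)=d_{\varphi,T}(U,V)$ for all $U,V,W\in[T]_\varphi$) whose induced topology is a group topology. In particular $[T]_\varphi$ is a Polish group.
   Context: $(X,\mu)$ is a standard atomless probability space and $\mathrm{Aut}(X,\mu)$ the group of measure-preserving transformations modulo null sets. For aperiodic $T$, $[T]$ is the set of $U\in\mathrm{Aut}(X,\mu)$ with $U(x)=T^{c_U(x)}(x)$ a.e. for a measurable $c_U:X\to\mathbb Z$ (the $T$-cocycle). $\varphi:\mathbb R_+\to\mathbb R_+$ is metric-compatible if it is subadditive, non-decreasing, $\varphi(0)=0$ and $\varphi(t)>0$ for $t>0$. $[T]_\varphi=\{U\in[T]:\int_X\varphi(|c_U|)d\mu<\infty\}$ and $d_{\varphi,T}(U,V)=\int_X\varphi(|c_U(x)-c_V(x)|)d\mu$. *)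

theory Defs
  imports "HOL-Probability.Probability"
begin

definition atomless :: "'a measure \<Rightarrow> bool" where
  "atomless M \<longleftrightarrow> (\<forall>A\<in>sets M. emeasure M A > 0 \<longrightarrow>
      (\<exists>B\<in>sets M. B \<subseteq> A \<and> 0 < emeasure M B \<and> emeasure M B < emeasure M A))"

definition std_atomless_prob :: "'a::polish_space measure \<Rightarrow> bool" where
  "std_atomless_prob M \<longleftrightarrow> prob_space M \<and> sets M = sets borel \<and> atomless M"

text \<open>Elements of Aut(X,mu) are represented by such bijections; two representatives
  denote the same element iff they agree almost everywhere (aut_eq).\<close>

definition aut :: "'a measure \<Rightarrow> ('a \<Rightarrow> 'a) \<Rightarrow> bool" where
  "aut M U \<longleftrightarrow> bij U \<and> U \<in> measurable M M \<and> inv U \<in> measurable M M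
     \<and> distr M M U = M"

definition aut_eq :: "'a measure \<Rightarrow> ('a \<Rightarrow> 'a) \<Rightarrow> ('a \<Rightarrow> 'a) \<Rightarrow> bool" where
  "aut_eq M U V \<longleftrightarrow> (AE x in M. U x = V x)"

definition tpow :: "('a \<Rightarrow> 'a) \<Rightarrow> int \<Rightarrow> 'a \<Rightarrow> 'a" where
  "tpow T k = (if k \<ge> 0 then T ^^ nat k else inv T ^^ nat (- k))"

definition aperiodic :: "'a measure \<Rightarrow> ('a \<Rightarrow> 'a) \<Rightarrow> bool" where
  "aperiodic M T \<longleftrightarrow> (\<forall>n::nat. n > 0 \<longrightarrow> (AE x in M. (T ^^ n) x \<noteq> x))"

definition is_cocycle :: "'a measure \<Rightarrow> ('a \<Rightarrow> 'a) \<Rightarrow> ('a \<Rightarrow> 'a) \<Rightarrow> ('a \<Rightarrow> int) \<Rightarrow> bool" where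
  "is_cocycle M T U c \<longleftrightarrow> c \<in> measurable M (count_space UNIV)
      \<and> (AE x in M. U x = tpow T (c x) x)"

definition cocycle :: "'a measure \<Rightarrow> ('a \<Rightarrow> 'a) \<Rightarrow> ('a \<Rightarrow> 'a) \<Rightarrow> 'a \<Rightarrow> int" where
  "cocycle M T U = (SOME c. is_cocycle M T U c)"

definition full_group :: "'a measure \<Rightarrow> ('a \<Rightarrow> 'a) \<Rightarrow> ('a \<Rightarrow> 'a) set" where
  "full_group M T = {U. aut M U \<and> (\<exists>c. is_cocycle M T U c)}"

definition metric_compatible :: "(real \<Rightarrow> real) \<Rightarrow> bool" where
  "metric_compatible \<phi> \<longleftrightarrow>
     (\<forall>t\<ge>0. \<phi> t \<ge> 0)
     \<and> (\<forall>s\<ge>0. \<forall>t\<ge>0. \<phi> (s + t) \<le> \<phi> s + \<phi> t)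
     \<and> (\<forall>s\<ge>0. \<forall>t\<ge>s. \<phi> s \<le> \<phi> t)
     \<and> \<phi> 0 = 0
     \<and> (\<forall>t>0. \<phi> t > 0)"

definition full_group_phi :: "'a measure \<Rightarrow> (real \<Rightarrow> real) \<Rightarrow> ('a \<Rightarrow> 'a) \<Rightarrow> ('a \<Rightarrow> 'a) set" where
  "full_group_phi M \<phi> T = {U \<in> full_group M T.
      (\<integral>\<^sup>+ x. ennreal (\<phi> (real_of_int \<bar>cocycle M T U x\<bar>)) \<partial>M) < \<infinity>}"

definition d_phi :: "'a measure \<Rightarrow> (real \<Rightarrow> real) \<Rightarrow> ('a \<Rightarrow> 'a) \<Rightarrow> ('a \<Rightarrow> 'a) \<Rightarrow> ('a \<Rightarrow> 'a) \<Rightarrow> real" where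
  "d_phi M \<phi> T U V = (\<integral> x. \<phi> (real_of_int \<bar>cocycle M T U x - cocycle M T V x\<bar>) \<partial>M)"

end

theory Submission
  imports Defs
begin

lemma tpow_nat: "tpow T (int n) = T ^^ n"
  by (simp add: tpow_def)

lemma tpow_zero[simp]: "tpow T 0 = id"
  by (simp add: tpow_def)

lemma tpow_neg: "tpow T (- int m) = inv T ^^ m"
proof (cases m)
  case 0 then show ?thesis by (simp add: tpow_def)
next
  case (Suc n)
  then have a: "\<not> (- int m \<ge> 0)" by simp
  have b: "nat (- (- int m)) = m" by simp
  show ?thesis unfolding tpow_def using a b by presburger
qed

lemma tpow_succ:
  assumes "bij T" shows "tpow T (k + 1) = T \<circ> tpow T k"
proof (cases "k \<ge> 0")
  case True
  then have "nat (k+1) = Suc (nat k)" by simp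
  then show ?thesis using True by (simp add: tpow_def)
next
  case False
  define m where "m = nat (-k) - 1"
  have m: "k = - int (Suc m)" using False unfolding m_def by simp
  have s: "T \<circ> inv T = id" using assms by (metis bij_is_surj surj_iff)
  have "k + 1 = - int m" using m by simp
  then have "tpow T (k+1) = inv T ^^ m" by (simp add: tpow_neg)
  moreover have "tpow T k = inv T \<circ> (inv T ^^ m)" using m by (simp only: tpow_neg funpow.simps(2))
  ultimately show ?thesis by (simp add: comp_assoc[symmetric] s)
qed

lemma tpow_pred:
  assumes "bij T" shows "tpow T (k - 1) = inv T \<circ> tpow T k"
proof -
  have "tpow T k = T \<circ> tpow T (k - 1)" using tpow_succ[OF assms, of "k-1"] by simp
  moreover have "inv T \<circ> T = id" using assms by (metis bij_is_inj inj_iff)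
  ultimately show ?thesis by (simp add: comp_assoc[symmetric])
qed

lemma tpow_add:
  assumes "bij T" shows "tpow T (a + b) = tpow T a \<circ> tpow T b"
proof (induction a rule: int_induct[where k=0])
  case base then show ?case by simp
next
  case (step1 i)
  have "tpow T (i + 1 + b) = tpow T ((i + b) + 1)" by (rule arg_cong[where f="tpow T"]) simp
  also have "\<dots> = T \<circ> tpow T (i+b)" by (rule tpow_succ[OF assms])
  also have "\<dots> = T \<circ> (tpow T i \<circ> tpow T b)" using step1 by (simp add: comp_def)
  also have "\<dots> = tpow T (i+1) \<circ> tpow T b" by (simp add: tpow_succ[OF assms] comp_assoc)
  finally show ?case .
next
  case (step2 i)
  have "tpow T (i - 1 + b) = tpow T ((i + b) - 1)" by (rule arg_cong[where f="tpow T"]) simp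
  also have "\<dots> = inv T \<circ> tpow T (i+b)" by (rule tpow_pred[OF assms])
  also have "\<dots> = inv T \<circ> (tpow T i \<circ> tpow T b)" using step2 by (simp add: comp_def)
  also have "\<dots> = tpow T (i-1) \<circ> tpow T b" by (simp add: tpow_pred[OF assms] comp_assoc)
  finally show ?case .
qed

lemma tpow_add_app:
  assumes "bij T" shows "tpow T (a + b) x = tpow T a (tpow T b x)"
  using tpow_add[OF assms] by simp

lemma tpow_cancel:
  assumes "bij T" shows "tpow T (- a) (tpow T a x) = x"
  using tpow_add_app[OF assms, of "-a" a x] by simp

lemma tpow_cancel2:
  assumes "bij T" shows "tpow T a (tpow T (-a) x) = x"
  using tpow_add_app[OF assms, of a "-a" x] by simp

section \<open>Automorphisms\<close>

lemma distr_id': "distr M M id = M"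
  unfolding id_def by (rule distr_id)

lemma aut_id: "aut M id"
  unfolding aut_def by (simp add: distr_id')

lemma aut_comp:
  assumes U: "aut M U" and V: "aut M V" shows "aut M (U \<circ> V)"
proof -
  have bU: "bij U" and bV: "bij V" using U V by (auto simp: aut_def)
  have "inv (U \<circ> V) = inv V \<circ> inv U" using bU bV by (simp add: o_inv_distrib bij_def)
  moreover have "distr M M (U \<circ> V) = M"
  proof -
    have "distr M M (U \<circ> V) = distr (distr M M V) M U"
      using U V by (subst distr_distr) (auto simp: aut_def)
    then show ?thesis using U V by (simp add: aut_def)
  qed
  ultimately show ?thesis using U V bU bV
    by (auto simp: aut_def bij_comp intro: measurable_comp)
qed

lemma aut_inv:
  assumes U: "aut M U" shows "aut M (inv U)"
proof -
  have bU: "bij U" using U by (auto simp: aut_def)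
  have ii: "inv (inv U) = U" using bU by (simp add: inv_inv_eq)
  have "distr M M (inv U) = distr (distr M M U) M (inv U)" using U by (simp add: aut_def)
  also have "\<dots> = distr M M (inv U \<circ> U)"
    using U by (subst distr_distr) (auto simp: aut_def)
  also have "inv U \<circ> U = id" using bU by (simp add: bij_is_inj)
  also have "distr M M id = M" by (rule distr_id')
  finally show ?thesis using U bU ii by (auto simp: aut_def bij_imp_bij_inv)
qed

lemma aut_funpow: "aut M U \<Longrightarrow> aut M (U ^^ n)"
  by (induction n) (auto simp: aut_id aut_comp)

lemma aut_tpow: "aut M T \<Longrightarrow> aut M (tpow T k)"
  by (simp add: tpow_def aut_funpow aut_inv)

lemma aut_emeasure:
  assumes "aut M U" "A \<in> sets M" shows "emeasure M (U -` A \<inter> space M) = emeasure M A"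
proof -
  have "emeasure M A = emeasure (distr M M U) A" using assms by (simp add: aut_def)
  also have "\<dots> = emeasure M (U -` A \<inter> space M)" using assms emeasure_distr[of U M M A] by (simp add: aut_def)
  finally show ?thesis by simp
qed

lemma AE_aut:
  assumes U: "aut M U" and P: "AE x in M. P x" shows "AE x in M. P (U x)"
proof -
  obtain N where N: "{x \<in> space M. \<not> P x} \<subseteq> N" "emeasure M N = 0" "N \<in> sets M"
    using P by (rule AE_E)
  have Um: "U \<in> measurable M M" using U by (simp add: aut_def)
  have "U -` N \<inter> space M \<in> null_sets M"
    using aut_emeasure[OF U N(3)] N Um by (auto intro: measurable_sets)
  moreover have "{x \<in> space M. \<not> P (U x)} \<subseteq> U -` N \<inter> space M"
    using N(1) Um by (auto simp: measurable_def)
  ultimately show ?thesis by (rule AE_I')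
qed

lemma integral_aut:
  fixes f :: "'a \<Rightarrow> real"
  assumes U: "aut M U" and f: "f \<in> borel_measurable M"
  shows "(\<integral>x. f (U x) \<partial>M) = (\<integral>x. f x \<partial>M)"
proof -
  have Um: "U \<in> measurable M M" using U by (simp add: aut_def)
  have "(\<integral>x. f x \<partial>M) = integral\<^sup>L (distr M M U) f" using U by (simp add: aut_def)
  also have "\<dots> = (\<integral>x. f (U x) \<partial>M)" using Um f by (rule integral_distr)
  finally show ?thesis by simp
qed

lemma integrable_aut:
  fixes f :: "'a \<Rightarrow> real"
  assumes U: "aut M U" and f: "f \<in> borel_measurable M"
  shows "integrable M (\<lambda>x. f (U x)) \<longleftrightarrow> integrable M f"
proof -
  have Um: "U \<in> measurable M M" using U by (simp add: aut_def)
  have "integrable M f \<longleftrightarrow> integrable (distr M M U) f" using U by (simp add: aut_def)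
  also have "\<dots> \<longleftrightarrow> integrable M (\<lambda>x. f (U x))" using Um f by (rule integrable_distr_eq)
  finally show ?thesis by simp
qed

lemma nn_integral_aut:
  assumes U: "aut M U" and f: "f \<in> borel_measurable M"
  shows "(\<integral>\<^sup>+x. f (U x) \<partial>M) = (\<integral>\<^sup>+x. f x \<partial>M)"
proof -
  have Um: "U \<in> measurable M M" using U by (simp add: aut_def)
  have "(\<integral>\<^sup>+x. f x \<partial>M) = integral\<^sup>N (distr M M U) f" using U by (simp add: aut_def)
  also have "\<dots> = (\<integral>\<^sup>+x. f (U x) \<partial>M)" using Um f by (intro nn_integral_distr) (auto simp: U[unfolded aut_def])
  finally show ?thesis by simp
qed

abbreviation intm :: "'a measure \<Rightarrow> ('a \<Rightarrow> int) \<Rightarrow> bool" where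
  "intm M c \<equiv> c \<in> M \<rightarrow>\<^sub>M count_space UNIV"



lemma intm_borel: "intm M c \<Longrightarrow> (\<lambda>x. f (c x) :: real) \<in> borel_measurable M"
  by (rule measurable_compose_countable[where f="\<lambda>i x. f i"]) auto

lemma intm_comp2: "intm M c \<Longrightarrow> intm M d \<Longrightarrow> intm M (\<lambda>x. g (c x) (d x))"
proof -
  assume c: "intm M c" and d: "intm M d"
  have "intm M (\<lambda>x. g i (d x))" for i
    by (rule measurable_compose_countable[where f="\<lambda>j x. g i j", OF _ d]) auto
  then show ?thesis using c by (rule measurable_compose_countable[where f="\<lambda>i x. g i (d x)"])
qed

lemma intm_comp1: "intm M c \<Longrightarrow> intm M (\<lambda>x. g (c x))"
  by (rule measurable_compose_countable[where f="\<lambda>j x. g j"]) auto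

lemma intm_const: "intm M (\<lambda>x. k)" by simp

lemma intm_meas: "intm M c \<Longrightarrow> U \<in> M \<rightarrow>\<^sub>M M \<Longrightarrow> intm M (\<lambda>x. c (U x))"
  by (rule measurable_compose)

lemma tpow_meas: "aut M T \<Longrightarrow> tpow T k \<in> M \<rightarrow>\<^sub>M M"
  using aut_tpow[of M T k] by (simp add: aut_def)

lemma piece_meas: "aut M T \<Longrightarrow> intm M c \<Longrightarrow> (\<lambda>x. tpow T (c x) x) \<in> M \<rightarrow>\<^sub>M M"
  by (rule measurable_compose_countable[where f="\<lambda>k x. tpow T k x"]) (auto dest: tpow_meas)

locale fgs =
  fixes M :: "'a::polish_space measure" and \<phi> :: "real \<Rightarrow> real" and T :: "'a \<Rightarrow> 'a"
  assumes std: "std_atomless_prob M" and mc: "metric_compatible \<phi>"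
    and autT: "aut M T" and aper: "aperiodic M T"
begin

sublocale prob_space M using std by (simp add: std_atomless_prob_def)

lemma sets_M: "sets M = sets borel" using std by (simp add: std_atomless_prob_def)

lemma space_M[simp]: "space M = UNIV"
  using sets_eq_imp_space_eq[OF sets_M] by simp

lemma bijT: "bij T" using autT by (simp add: aut_def)

definition Phi :: "int \<Rightarrow> real" where "Phi k = \<phi> (real_of_int \<bar>k\<bar>)"

lemma phi_nonneg: "t \<ge> 0 \<Longrightarrow> \<phi> t \<ge> 0" using mc by (simp add: metric_compatible_def)
lemma phi_mono: "0 \<le> s \<Longrightarrow> s \<le> t \<Longrightarrow> \<phi> s \<le> \<phi> t" using mc by (simp add: metric_compatible_def)
lemma phi_sub: "0 \<le> s \<Longrightarrow> 0 \<le> t \<Longrightarrow> \<phi> (s + t) \<le> \<phi> s + \<phi> t" using mc by (simp add: metric_compatible_def)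
lemma phi_0: "\<phi> 0 = 0" using mc by (simp add: metric_compatible_def)
lemma phi_pos: "t > 0 \<Longrightarrow> \<phi> t > 0" using mc by (simp add: metric_compatible_def)

lemma Phi_nonneg: "Phi k \<ge> 0" by (simp add: phi_nonneg Phi_def)
lemma Phi_0: "Phi 0 = 0" by (simp add: phi_0 Phi_def)
lemma Phi_minus[simp]: "Phi (- k) = Phi k" by (simp add: Phi_def)
lemma Phi_mono: "\<bar>a\<bar> \<le> \<bar>b\<bar> \<Longrightarrow> Phi a \<le> Phi b" unfolding Phi_def by (intro phi_mono) auto
lemma Phi_add: "Phi (a + b) \<le> Phi a + Phi b"
proof -
  have "Phi (a + b) \<le> \<phi> (real_of_int \<bar>a\<bar> + real_of_int \<bar>b\<bar>)" unfolding Phi_def by (intro phi_mono) auto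
  also have "\<dots> \<le> Phi a + Phi b" unfolding Phi_def by (intro phi_sub) auto
  finally show ?thesis .
qed
lemma Phi_diff: "Phi (a - b) \<le> Phi a + Phi b"
  using Phi_add[of a "-b"] by simp
lemma Phi_tri: "Phi (a - c) \<le> Phi (a - b) + Phi (b - c)"
  using Phi_add[of "a - b" "b - c"] by simp
lemma Phi_ge1: "k \<noteq> 0 \<Longrightarrow> Phi k \<ge> \<phi> 1" unfolding Phi_def by (intro phi_mono) auto
lemma phi1_pos: "\<phi> 1 > 0" by (rule phi_pos) simp
lemma Phi_eq0: "Phi k = 0 \<longleftrightarrow> k = 0"
  using Phi_ge1[of k] phi1_pos Phi_0 by (cases "k = 0") auto

section \<open>Uniqueness of cocycles\<close>

lemma per: "AE x in M. \<forall>n::nat. \<forall>k::int. n > 0 \<longrightarrow> (T ^^ n) (tpow T k x) \<noteq> tpow T k x"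
proof -
  have "AE x in M. n > 0 \<longrightarrow> (T ^^ n) (tpow T k x) \<noteq> tpow T k x" for n :: nat and k :: int
  proof (cases "n > 0")
    case True
    then have "AE x in M. (T ^^ n) x \<noteq> x" using aper by (simp add: aperiodic_def)
    then have "AE x in M. (T ^^ n) (tpow T k x) \<noteq> tpow T k x" by (rule AE_aut[OF aut_tpow[OF autT]])
    then show ?thesis by auto
  qed simp
  then show ?thesis by (simp add: AE_all_countable)
qed

lemma uniq: "AE x in M. \<forall>a b. tpow T a x = tpow T b x \<longrightarrow> a = b"
  using per
proof eventually_elim
  case (elim x)
  have *: "tpow T a x \<noteq> tpow T b x" if "a < b" for a b
  proof
    assume eq: "tpow T a x = tpow T b x"
    define n where "n = nat (b - a)"
    have n: "n > 0" "b = int n + a" using that by (auto simp: n_def)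
    have "tpow T b x = (T ^^ n) (tpow T a x)"
      unfolding n(2) by (simp add: tpow_add_app[OF bijT] tpow_nat)
    then have "(T ^^ n) (tpow T a x) = tpow T a x" using eq by simp
    then show False using elim n(1) by blast
  qed
  show ?case
  proof (intro allI impI)
    fix a b assume "tpow T a x = tpow T b x"
    then show "a = b" using *[of a b] *[of b a] by (cases a b rule: linorder_cases) auto
  qed
qed

abbreviation cc where "cc U \<equiv> cocycle M T U"
abbreviation GG where "GG \<equiv> full_group_phi M \<phi> T"
abbreviation dd where "dd \<equiv> d_phi M \<phi> T"

lemma fg_cocycle: "U \<in> full_group M T \<Longrightarrow> is_cocycle M T U (cc U)"
  unfolding full_group_def cocycle_def by (auto intro: someI[where P="is_cocycle M T U"])

lemma coc_meas: "is_cocycle M T U c \<Longrightarrow> intm M c"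
  by (simp add: is_cocycle_def)

lemma coc_unique:
  assumes "is_cocycle M T U c1" "is_cocycle M T U c2" shows "AE x in M. c1 x = c2 x"
proof -
  have a: "AE x in M. U x = tpow T (c1 x) x" and b: "AE x in M. U x = tpow T (c2 x) x"
    using assms by (auto simp: is_cocycle_def)
  show ?thesis using uniq a b by eventually_elim auto
qed

lemma coc_eq: "U \<in> full_group M T \<Longrightarrow> is_cocycle M T U c \<Longrightarrow> AE x in M. cc U x = c x"
  using fg_cocycle coc_unique by blast

lemma coc_congr: "is_cocycle M T U c \<Longrightarrow> aut_eq M U V \<Longrightarrow> is_cocycle M T V c"
  unfolding is_cocycle_def aut_eq_def by (auto elim: AE_mp)

lemma coc_comp:
  assumes u: "is_cocycle M T U cu" and v: "is_cocycle M T V cv" and V: "aut M V"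
  shows "is_cocycle M T (U \<circ> V) (\<lambda>x. cu (V x) + cv x)"
proof -
  have Vm: "V \<in> M \<rightarrow>\<^sub>M M" using V by (simp add: aut_def)
  have m: "intm M (\<lambda>x. cu (V x) + cv x)"
    using intm_comp2[OF intm_meas[OF coc_meas[OF u] Vm] coc_meas[OF v], of "(+)"] by simp
  have a1: "AE x in M. U (V x) = tpow T (cu (V x)) (V x)"
    using u by (intro AE_aut[OF V]) (simp add: is_cocycle_def)
  have a2: "AE x in M. V x = tpow T (cv x) x" using v by (simp add: is_cocycle_def)
  have "AE x in M. (U \<circ> V) x = tpow T (cu (V x) + cv x) x"
    using a1 a2 by eventually_elim (simp add: tpow_add_app[OF bijT])
  then show ?thesis using m by (simp add: is_cocycle_def)
qed

lemma coc_inv: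
  assumes u: "is_cocycle M T U c" and U: "aut M U"
  shows "is_cocycle M T (inv U) (\<lambda>x. - c (inv U x))"
proof -
  have iU: "aut M (inv U)" using aut_inv[OF U] .
  have iUm: "inv U \<in> M \<rightarrow>\<^sub>M M" using iU by (simp add: aut_def)
  have bU: "bij U" using U by (simp add: aut_def)
  have m: "intm M (\<lambda>x. - c (inv U x))"
    using intm_comp1[OF intm_meas[OF coc_meas[OF u] iUm], of uminus] by simp
  have a1: "AE x in M. U (inv U x) = tpow T (c (inv U x)) (inv U x)"
    using u by (intro AE_aut[OF iU]) (simp add: is_cocycle_def)
  have "AE x in M. inv U x = tpow T (- c (inv U x)) x"
    using a1
  proof eventually_elim
    case (elim x)
    have "x = tpow T (c (inv U x)) (inv U x)" using elim bU by (simp add: bij_is_surj surj_f_inv_f)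
    then have "tpow T (- c (inv U x)) x = tpow T (- c (inv U x)) (tpow T (c (inv U x)) (inv U x))" by simp
    also have "\<dots> = inv U x" by (rule tpow_cancel[OF bijT])
    finally show ?case by simp
  qed
  then show ?thesis using m by (simp add: is_cocycle_def)
qed

lemma coc_id: "is_cocycle M T id (\<lambda>x. 0)"
  by (simp add: is_cocycle_def)

lemma intPhi_meas: "intm M c \<Longrightarrow> (\<lambda>x. Phi (c x)) \<in> borel_measurable M"
  by (rule intm_borel)

lemma GG_fin: "U \<in> GG \<longleftrightarrow> U \<in> full_group M T \<and> (\<integral>\<^sup>+ x. ennreal (Phi (cc U x)) \<partial>M) < \<infinity>"
  by (simp add: full_group_phi_def Phi_def)

lemma GG_iff: "U \<in> GG \<longleftrightarrow> aut M U \<and> (\<exists>c. is_cocycle M T U c \<and> integrable M (\<lambda>x. Phi (c x)))"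
proof
  assume U: "U \<in> GG"
  then have fg: "U \<in> full_group M T" and fin: "(\<integral>\<^sup>+ x. ennreal (Phi (cc U x)) \<partial>M) < \<infinity>"
    by (auto simp: GG_fin)
  have c: "is_cocycle M T U (cc U)" by (rule fg_cocycle[OF fg])
  have "integrable M (\<lambda>x. Phi (cc U x))"
    using fin intPhi_meas[OF coc_meas[OF c]] by (simp add: integrable_iff_bounded abs_of_nonneg[OF Phi_nonneg])
  then show "aut M U \<and> (\<exists>c. is_cocycle M T U c \<and> integrable M (\<lambda>x. Phi (c x)))"
    using c fg by (auto simp: full_group_def)
next
  assume "aut M U \<and> (\<exists>c. is_cocycle M T U c \<and> integrable M (\<lambda>x. Phi (c x)))"
  then obtain c where U: "aut M U" and c: "is_cocycle M T U c" and i: "integrable M (\<lambda>x. Phi (c x))" by blast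
  have fg: "U \<in> full_group M T" using U c by (auto simp: full_group_def)
  have e: "AE x in M. cc U x = c x" by (rule coc_eq[OF fg c])
  have "integrable M (\<lambda>x. Phi (cc U x))"
    using i e by (subst integrable_cong_AE[OF intPhi_meas[OF coc_meas[OF fg_cocycle[OF fg]]] intPhi_meas[OF coc_meas[OF c]]]) auto
  then have "(\<integral>\<^sup>+ x. ennreal (Phi (cc U x)) \<partial>M) < \<infinity>"
    by (simp add: integrable_iff_bounded abs_of_nonneg[OF Phi_nonneg])
  then show "U \<in> GG" using fg by (simp add: GG_fin)
qed

lemma GG_D:
  assumes "U \<in> GG"
  shows "aut M U" "U \<in> full_group M T" "is_cocycle M T U (cc U)" "intm M (cc U)"
    "integrable M (\<lambda>x. Phi (cc U x))"
proof -
  show fg: "U \<in> full_group M T" using assms by (simp add: GG_fin)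
  then show "aut M U" by (simp add: full_group_def)
  show c: "is_cocycle M T U (cc U)" by (rule fg_cocycle[OF fg])
  then show "intm M (cc U)" by (rule coc_meas)
  obtain c' where c': "is_cocycle M T U c'" "integrable M (\<lambda>x. Phi (c' x))" using assms GG_iff by blast
  have e: "AE x in M. cc U x = c' x" by (rule coc_eq[OF fg c'(1)])
  show "integrable M (\<lambda>x. Phi (cc U x))"
    using c'(2) e by (subst integrable_cong_AE[OF intPhi_meas[OF coc_meas[OF c]] intPhi_meas[OF coc_meas[OF c'(1)]]]) auto
qed

lemma GG_I: "aut M U \<Longrightarrow> is_cocycle M T U c \<Longrightarrow> integrable M (\<lambda>x. Phi (c x)) \<Longrightarrow> U \<in> GG"
  using GG_iff by blast

lemma integrable_Phi_diff:
  assumes "intm M c1" "intm M c2" "integrable M (\<lambda>x. Phi (c1 x))" "integrable M (\<lambda>x. Phi (c2 x))"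
  shows "integrable M (\<lambda>x. Phi (c1 x - c2 x))"
proof -
  have i: "integrable M (\<lambda>x. Phi (c1 x) + Phi (c2 x))" using assms by simp
  have m: "(\<lambda>x. Phi (c1 x - c2 x)) \<in> borel_measurable M"
    using intPhi_meas[OF intm_comp2[OF assms(1,2), of "(-)"]] by simp
  have "AE x in M. norm (Phi (c1 x - c2 x)) \<le> norm (Phi (c1 x) + Phi (c2 x))"
    using Phi_diff Phi_nonneg by (auto intro!: AE_I2 simp: add_nonneg_nonneg)
  then show ?thesis using Bochner_Integration.integrable_bound[OF i m] by blast
qed

lemma integrable_Phi_add:
  assumes "intm M c1" "intm M c2" "integrable M (\<lambda>x. Phi (c1 x))" "integrable M (\<lambda>x. Phi (c2 x))"
  shows "integrable M (\<lambda>x. Phi (c1 x + c2 x))"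
  using integrable_Phi_diff[OF assms(1) intm_comp1[OF assms(2), of uminus]] assms(3,4) by simp

lemma dd_def': "dd U V = (\<integral>x. Phi (cc U x - cc V x) \<partial>M)"
  by (simp add: d_phi_def Phi_def)

lemma dd_cocycles:
  assumes U: "U \<in> full_group M T" and V: "V \<in> full_group M T"
    and cu: "is_cocycle M T U cu" and cv: "is_cocycle M T V cv"
  shows "dd U V = (\<integral>x. Phi (cu x - cv x) \<partial>M)"
proof -
  have eU: "AE x in M. cc U x = cu x" by (rule coc_eq[OF U cu])
  have eV: "AE x in M. cc V x = cv x" by (rule coc_eq[OF V cv])
  show ?thesis unfolding dd_def'
    apply (rule integral_cong_AE)
    using intPhi_meas[OF intm_comp2[OF coc_meas[OF fg_cocycle[OF U]] coc_meas[OF fg_cocycle[OF V]], of "(-)"]]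
      apply simp
    using intPhi_meas[OF intm_comp2[OF coc_meas[OF cu] coc_meas[OF cv], of "(-)"]] apply simp
    using eU eV by eventually_elim simp
qed

lemma GG_integrable_d:
  assumes "U \<in> GG" "V \<in> GG" shows "integrable M (\<lambda>x. Phi (cc U x - cc V x))"
  using integrable_Phi_diff[OF GG_D(4)[OF assms(1)] GG_D(4)[OF assms(2)] GG_D(5)[OF assms(1)] GG_D(5)[OF assms(2)]] .

section \<open>Group\<close>

lemma id_GG: "id \<in> GG"
  by (rule GG_I[OF aut_id coc_id]) (simp add: Phi_0)

lemma comp_GG:
  assumes U: "U \<in> GG" and V: "V \<in> GG" shows "U \<circ> V \<in> GG"
proof (rule GG_I[OF aut_comp[OF GG_D(1)[OF U] GG_D(1)[OF V]] coc_comp[OF GG_D(3)[OF U] GG_D(3)[OF V] GG_D(1)[OF V]]])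
  have Vm: "V \<in> M \<rightarrow>\<^sub>M M" using GG_D(1)[OF V] by (simp add: aut_def)
  have "integrable M (\<lambda>x. Phi (cc U (V x)))"
    using GG_D(5)[OF U] integrable_aut[OF GG_D(1)[OF V] intPhi_meas[OF GG_D(4)[OF U]]] by simp
  then show "integrable M (\<lambda>x. Phi (cc U (V x) + cc V x))"
    by (rule integrable_Phi_add[OF intm_meas[OF GG_D(4)[OF U] Vm] GG_D(4)[OF V] _ GG_D(5)[OF V]])
qed

lemma inv_GG:
  assumes U: "U \<in> GG" shows "inv U \<in> GG"
proof (rule GG_I[OF aut_inv[OF GG_D(1)[OF U]] coc_inv[OF GG_D(3)[OF U] GG_D(1)[OF U]]])
  show "integrable M (\<lambda>x. Phi (- cc U (inv U x)))"
    using GG_D(5)[OF U] integrable_aut[OF aut_inv[OF GG_D(1)[OF U]] intPhi_meas[OF GG_D(4)[OF U]]] by simp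
qed

lemma eq_GG:
  assumes U: "U \<in> GG" and V: "aut M V" and e: "aut_eq M U V" shows "V \<in> GG"
  using GG_I[OF V coc_congr[OF GG_D(3)[OF U] e] GG_D(5)[OF U]] .

section \<open>Metric\<close>

lemma dd_nonneg: "dd U V \<ge> 0"
  unfolding dd_def' by (rule Bochner_Integration.integral_nonneg) (simp add: Phi_nonneg)

lemma dd_sym: "dd U V = dd V U"
  unfolding dd_def' Phi_def by (simp add: abs_minus_commute)

lemma dd_tri:
  assumes "U \<in> GG" "V \<in> GG" "W \<in> GG" shows "dd U W \<le> dd U V + dd V W"
proof -
  have "dd U W \<le> (\<integral>x. Phi (cc U x - cc V x) + Phi (cc V x - cc W x) \<partial>M)"
    unfolding dd_def'
    by (rule integral_mono) (use GG_integrable_d assms Phi_tri in auto)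
  also have "\<dots> = dd U V + dd V W"
    unfolding dd_def' by (rule Bochner_Integration.integral_add) (use GG_integrable_d assms in auto)
  finally show ?thesis .
qed

lemma dd_zero:
  assumes U: "U \<in> GG" and V: "V \<in> GG" shows "dd U V = 0 \<longleftrightarrow> aut_eq M U V"
proof -
  have "dd U V = 0 \<longleftrightarrow> (AE x in M. Phi (cc U x - cc V x) = 0)"
    unfolding dd_def' by (rule integral_nonneg_eq_0_iff_AE) (use GG_integrable_d[OF U V] Phi_nonneg in auto)
  also have "\<dots> \<longleftrightarrow> (AE x in M. cc U x = cc V x)" by (simp add: Phi_eq0)
  also have "\<dots> \<longleftrightarrow> aut_eq M U V"
  proof
    assume e: "AE x in M. cc U x = cc V x"
    have a: "AE x in M. U x = tpow T (cc U x) x" and b: "AE x in M. V x = tpow T (cc V x) x"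
      using GG_D(3)[OF U] GG_D(3)[OF V] by (auto simp: is_cocycle_def)
    show "aut_eq M U V" unfolding aut_eq_def
      using e a b by eventually_elim simp
  next
    assume e: "aut_eq M U V"
    have "is_cocycle M T V (cc U)" by (rule coc_congr[OF GG_D(3)[OF U] e])
    then have "AE x in M. cc V x = cc U x" by (rule coc_eq[OF GG_D(2)[OF V]])
    then show "AE x in M. cc U x = cc V x" by eventually_elim simp
  qed
  finally show ?thesis .
qed

lemma dd_rinv:
  assumes U: "U \<in> GG" and V: "V \<in> GG" and W: "W \<in> GG" shows "dd (U \<circ> W) (V \<circ> W) = dd U V"
proof -
  have aW: "aut M W" by (rule GG_D(1)[OF W])
  have "dd (U \<circ> W) (V \<circ> W) = (\<integral>x. Phi ((cc U (W x) + cc W x) - (cc V (W x) + cc W x)) \<partial>M)"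
    by (rule dd_cocycles[OF GG_D(2)[OF comp_GG[OF U W]] GG_D(2)[OF comp_GG[OF V W]]
          coc_comp[OF GG_D(3)[OF U] GG_D(3)[OF W] aW] coc_comp[OF GG_D(3)[OF V] GG_D(3)[OF W] aW]])
  also have "\<dots> = (\<integral>x. Phi (cc U (W x) - cc V (W x)) \<partial>M)" by simp
  also have "\<dots> = (\<integral>x. Phi (cc U x - cc V x) \<partial>M)"
    by (rule integral_aut[OF aW intPhi_meas[OF intm_comp2[OF GG_D(4)[OF U] GG_D(4)[OF V], of "(-)"]]])
  finally show ?thesis by (simp add: dd_def')
qed

end

lemma pred_intm2:
  assumes c1: "intm M c1" and c2: "intm M c2"
  shows "{x \<in> space M. P (c1 x) (c2 x)} \<in> sets M"
proof -
  have "(\<lambda>x. P i (c2 x)) \<in> M \<rightarrow>\<^sub>M count_space UNIV" for i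
    by (rule measurable_compose_countable[where f="\<lambda>j x. P i j", OF _ c2]) auto
  then have f: "(\<lambda>x. P (c1 x) (c2 x)) \<in> M \<rightarrow>\<^sub>M count_space UNIV"
    by (rule measurable_compose_countable[where f="\<lambda>i x. P i (c2 x)", OF _ c1])
  have "(\<lambda>x. P (c1 x) (c2 x)) -` {True} \<inter> space M \<in> sets M"
    by (rule measurable_sets[OF f]) auto
  moreover have "(\<lambda>x. P (c1 x) (c2 x)) -` {True} \<inter> space M = {x \<in> space M. P (c1 x) (c2 x)}" by auto
  ultimately show ?thesis by simp
qed

context fgs
begin

lemma AC_seq:
  fixes f :: "'a \<Rightarrow> real"
  assumes f: "integrable M f" and nn: "\<And>x. f x \<ge> 0" and A: "\<And>n. A n \<in> sets M"
    and lim: "(\<lambda>n. measure M (A n)) \<longlonglongrightarrow> 0"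
  shows "(\<lambda>n. \<integral>x. f x * indicator (A n) x \<partial>M) \<longlonglongrightarrow> 0"
proof (rule LIMSEQ_I)
  fix r :: real assume r: "r > 0"
  have fm[measurable]: "f \<in> borel_measurable M" using f by auto
  have bnd: "AE x in M. norm (f x - min (f x) (real K)) \<le> f x" for K
    using nn by (auto simp: min_def)
  have conv: "(\<lambda>K::nat. \<integral>x. f x - min (f x) (real K) \<partial>M) \<longlonglongrightarrow> (\<integral>x. 0 \<partial>M)"
  proof (rule integral_dominated_convergence[where w=f])
    show "(\<lambda>x. 0::real) \<in> borel_measurable M" by simp
    show "(\<lambda>x. f x - min (f x) (real K)) \<in> borel_measurable M" for K by measurable
    show "integrable M f" by fact
    show "AE x in M. (\<lambda>K. f x - min (f x) (real K)) \<longlonglongrightarrow> 0"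
    proof (rule AE_I2)
      fix x
      have "eventually (\<lambda>K. f x - min (f x) (real K) = 0) sequentially"
        unfolding eventually_sequentially
      proof (intro exI allI impI)
        fix K assume "nat \<lceil>f x\<rceil> \<le> K"
        then have "f x \<le> real K" by linarith
        then show "f x - min (f x) (real K) = 0" by simp
      qed
      then show "(\<lambda>K. f x - min (f x) (real K)) \<longlonglongrightarrow> 0" by (rule tendsto_eventually)
    qed
    show "AE x in M. norm (f x - min (f x) (real K)) \<le> f x" for K by (rule bnd)
  qed
  have conv': "(\<lambda>K::nat. \<integral>x. f x - min (f x) (real K) \<partial>M) \<longlonglongrightarrow> 0" using conv by simp
  have r2: "0 < r/2" using r by simp
  have "eventually (\<lambda>K. (\<integral>x. f x - min (f x) (real K) \<partial>M) < r/2) sequentially"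
    by (rule order_tendstoD(2)[OF conv' r2])
  then obtain K where K: "(\<integral>x. f x - min (f x) (real K) \<partial>M) < r/2"
    unfolding eventually_sequentially by auto
  have pos: "r / (2 * (real K + 1)) > 0" using r by simp
  have "eventually (\<lambda>n. measure M (A n) < r / (2 * (real K + 1))) sequentially"
    using order_tendstoD(2)[OF lim pos] .
  then obtain N where N: "\<And>n. n \<ge> N \<Longrightarrow> measure M (A n) < r / (2 * (real K + 1))"
    unfolding eventually_sequentially by auto
  show "\<exists>no. \<forall>n\<ge>no. norm ((\<integral>x. f x * indicator (A n) x \<partial>M) - 0) < r"
  proof (intro exI allI impI)
    fix n assume n: "n \<ge> N"
    have i1: "integrable M (\<lambda>x. f x * indicator (A n) x)"
      by (rule integrable_real_mult_indicator[OF A f])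
    have i2: "integrable M (\<lambda>x. f x - min (f x) (real K))"
      by (rule Bochner_Integration.integrable_bound[OF f]) (use bnd nn in \<open>auto simp: min_def\<close>)
    have fin: "emeasure M (A n) < \<infinity>" using emeasure_finite[of "A n"] by (simp add: less_top[symmetric])
    have i3: "integrable M (\<lambda>x. real K * indicator (A n) x)"
      using integrable_real_indicator[OF A fin] by (rule Bochner_Integration.integrable_mult_right)
    have "(\<integral>x. f x * indicator (A n) x \<partial>M) \<le> (\<integral>x. (f x - min (f x) (real K)) + real K * indicator (A n) x \<partial>M)"
      by (rule integral_mono[OF i1 Bochner_Integration.integrable_add[OF i2 i3]])
        (use nn in \<open>auto simp: indicator_def min_def\<close>)
    also have "\<dots> = (\<integral>x. f x - min (f x) (real K) \<partial>M) + real K * measure M (A n)"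
      using i2 i3 by (simp add: Bochner_Integration.integral_add)
    also have "\<dots> < r/2 + real K * (r / (2 * (real K + 1)))"
    proof -
      have "real K * measure M (A n) \<le> real K * (r / (2 * (real K + 1)))"
        using N[OF n] by (intro mult_left_mono) auto
      then show ?thesis using K by linarith
    qed
    also have "\<dots> \<le> r"
    proof -
      have "real K * (r / (2 * (real K + 1))) \<le> r / 2"
        using r by (simp add: field_simps)
      then show ?thesis by linarith
    qed
    finally have "(\<integral>x. f x * indicator (A n) x \<partial>M) < r" .
    moreover have "(\<integral>x. f x * indicator (A n) x \<partial>M) \<ge> 0"
      by (rule Bochner_Integration.integral_nonneg) (use nn in \<open>simp\<close>)
    ultimately show "norm ((\<integral>x. f x * indicator (A n) x \<partial>M) - 0) < r" by simp
  qed
qed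

lemma img_sets:
  assumes W: "aut M W" and E: "E \<in> sets M"
  shows "W ` E \<in> sets M" "measure M (W ` E) = measure M E" "W ` E = inv W -` E"
proof -
  have bW: "bij W" using W by (simp add: aut_def)
  show eq: "W ` E = inv W -` E"
  proof
    show "W ` E \<subseteq> inv W -` E" using bW by (auto simp: bij_is_inj)
    show "inv W -` E \<subseteq> W ` E"
    proof
      fix x assume "x \<in> inv W -` E"
      then have "inv W x \<in> E" by simp
      moreover have "W (inv W x) = x" using bW by (simp add: bij_is_surj surj_f_inv_f)
      ultimately show "x \<in> W ` E" by (metis imageI)
    qed
  qed
  have iW: "aut M (inv W)" by (rule aut_inv[OF W])
  have iWm: "inv W \<in> M \<rightarrow>\<^sub>M M" using iW by (simp add: aut_def)
  have "inv W -` E \<inter> space M \<in> sets M" by (rule measurable_sets[OF iWm E])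
  then show s: "W ` E \<in> sets M" using eq by simp
  have "emeasure M (inv W -` E \<inter> space M) = emeasure M E" by (rule aut_emeasure[OF iW E])
  then have "emeasure M (W ` E) = emeasure M E" using eq by simp
  then show "measure M (W ` E) = measure M E" by (simp add: measure_def)
qed

lemma integral_img:
  assumes W: "aut M W" and E: "E \<in> sets M" and c: "intm M c"
  shows "(\<integral>x. Phi (c (W x)) * indicator E x \<partial>M) = (\<integral>y. Phi (c y) * indicator (W ` E) y \<partial>M)"
proof -
  have bW: "bij W" using W by (simp add: aut_def)
  have "indicator E x = (indicator (W ` E) (W x) :: real)" for x
    using bW by (auto simp: indicator_def bij_is_inj inj_image_mem_iff)
  then have "(\<integral>x. Phi (c (W x)) * indicator E x \<partial>M) = (\<integral>x. Phi (c (W x)) * indicator (W ` E) (W x) \<partial>M)"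
    by simp
  also have "\<dots> = (\<integral>y. Phi (c y) * indicator (W ` E) y \<partial>M)"
    using img_sets(1)[OF W E] intPhi_meas[OF c]
    by (intro integral_aut[OF W]) (auto intro: borel_measurable_times borel_measurable_indicator)
  finally show ?thesis .
qed

lemma meas_neq_le:
  assumes U: "U \<in> GG" and V: "V \<in> GG"
  shows "{x. cc U x \<noteq> cc V x} \<in> sets M" "\<phi> 1 * measure M {x. cc U x \<noteq> cc V x} \<le> dd U V"
proof -
  show s: "{x. cc U x \<noteq> cc V x} \<in> sets M"
    using pred_intm2[OF GG_D(4)[OF U] GG_D(4)[OF V], of "(\<noteq>)"] by simp
  have "(\<integral>x. \<phi> 1 * indicator {x. cc U x \<noteq> cc V x} x \<partial>M) = \<phi> 1 * (\<integral>x. indicator {x. cc U x \<noteq> cc V x} x \<partial>M)"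
    by (rule integral_mult_right_zero)
  also have "(\<integral>x. indicator {x. cc U x \<noteq> cc V x} x \<partial>M) = measure M {x. cc U x \<noteq> cc V x}"
    using Bochner_Integration.integral_indicator[of M "{x. cc U x \<noteq> cc V x}"] by simp
  finally have "\<phi> 1 * measure M {x. cc U x \<noteq> cc V x} = (\<integral>x. \<phi> 1 * indicator {x. cc U x \<noteq> cc V x} x \<partial>M)"
    by simp
  also have "\<dots> \<le> (\<integral>x. Phi (cc U x - cc V x) \<partial>M)"
  proof (rule integral_mono)
    have fin: "emeasure M {x. cc U x \<noteq> cc V x} < \<infinity>"
      using emeasure_finite[of "{x. cc U x \<noteq> cc V x}"] by (simp add: less_top[symmetric])
    show "integrable M (\<lambda>x. \<phi> 1 * indicator {x. cc U x \<noteq> cc V x} x)"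
      using integrable_real_indicator[OF s fin] by (rule Bochner_Integration.integrable_mult_right)
    show "integrable M (\<lambda>x. Phi (cc U x - cc V x))" by (rule GG_integrable_d[OF U V])
    show "\<phi> 1 * indicator {x. cc U x \<noteq> cc V x} x \<le> Phi (cc U x - cc V x)" for x
      using Phi_ge1[of "cc U x - cc V x"] Phi_nonneg[of "cc U x - cc V x"] by (auto simp: indicator_def)
  qed
  finally show "\<phi> 1 * measure M {x. cc U x \<noteq> cc V x} \<le> dd U V" by (simp add: dd_def')
qed

lemma meas_neq_tendsto:
  assumes R: "\<And>n. R n \<in> GG" and V: "V \<in> GG" and lim: "(\<lambda>n. dd (R n) V) \<longlonglongrightarrow> 0"
  shows "(\<lambda>n. measure M {x. cc (R n) x \<noteq> cc V x}) \<longlonglongrightarrow> 0"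
proof (rule tendsto_sandwich[where f="\<lambda>n. 0" and h="\<lambda>n. dd (R n) V / \<phi> 1"])
  show "eventually (\<lambda>n. 0 \<le> measure M {x. cc (R n) x \<noteq> cc V x}) sequentially" by simp
  show "eventually (\<lambda>n. measure M {x. cc (R n) x \<noteq> cc V x} \<le> dd (R n) V / \<phi> 1) sequentially"
    using meas_neq_le(2)[OF R V] phi1_pos by (simp add: field_simps mult.commute)
  show "(\<lambda>n. 0::real) \<longlonglongrightarrow> 0" by simp
  show "(\<lambda>n. dd (R n) V / \<phi> 1) \<longlonglongrightarrow> 0" using tendsto_divide_zero[OF lim] by simp
qed

lemma left_cont:
  assumes U: "U \<in> GG" and V: "V \<in> GG" and R: "\<And>n. R n \<in> GG"
    and lim: "(\<lambda>n. dd (R n) V) \<longlonglongrightarrow> 0"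
  shows "(\<lambda>n. dd (U \<circ> R n) (U \<circ> V)) \<longlonglongrightarrow> 0"
proof -
  define E where "E n = {x. cc (R n) x \<noteq> cc V x}" for n
  have E: "E n \<in> sets M" for n unfolding E_def by (rule meas_neq_le(1)[OF R V])
  have mE: "(\<lambda>n. measure M (E n)) \<longlonglongrightarrow> 0" unfolding E_def by (rule meas_neq_tendsto[OF R V lim])
  have aR: "aut M (R n)" for n by (rule GG_D(1)[OF R])
  have aV: "aut M V" by (rule GG_D(1)[OF V])
  have cu: "intm M (cc U)" by (rule GG_D(4)[OF U])
  have iu: "integrable M (\<lambda>x. Phi (cc U x))" by (rule GG_D(5)[OF U])
  define f1 where "f1 n = (\<integral>x. Phi (cc U (R n x)) * indicator (E n) x \<partial>M)" for n
  define f2 where "f2 n = (\<integral>x. Phi (cc U (V x)) * indicator (E n) x \<partial>M)" for n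
  have t1: "f1 \<longlonglongrightarrow> 0"
  proof -
    have e: "f1 = (\<lambda>n. \<integral>y. Phi (cc U y) * indicator (R n ` E n) y \<partial>M)"
      unfolding f1_def by (intro ext integral_img[OF aR E cu])
    moreover have "(\<lambda>n. \<integral>y. Phi (cc U y) * indicator (R n ` E n) y \<partial>M) \<longlonglongrightarrow> 0"
      by (rule AC_seq[OF iu Phi_nonneg img_sets(1)[OF aR E]]) (use mE img_sets(2)[OF aR E] in simp)
    ultimately show ?thesis by (simp only: e)
  qed
  have t2: "f2 \<longlonglongrightarrow> 0"
  proof -
    have e: "f2 = (\<lambda>n. \<integral>y. Phi (cc U y) * indicator (V ` E n) y \<partial>M)"
      unfolding f2_def by (intro ext integral_img[OF aV E cu])
    moreover have "(\<lambda>n. \<integral>y. Phi (cc U y) * indicator (V ` E n) y \<partial>M) \<longlonglongrightarrow> 0"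
      by (rule AC_seq[OF iu Phi_nonneg img_sets(1)[OF aV E]]) (use mE img_sets(2)[OF aV E] in simp)
    ultimately show ?thesis by (simp only: e)
  qed
  have bound: "dd (U \<circ> R n) (U \<circ> V) \<le> f1 n + f2 n + dd (R n) V" for n
  proof -
    have Rm: "R n \<in> M \<rightarrow>\<^sub>M M" using aR by (simp add: aut_def)
    have Vm: "V \<in> M \<rightarrow>\<^sub>M M" using aV by (simp add: aut_def)
    have eq: "dd (U \<circ> R n) (U \<circ> V) = (\<integral>x. Phi ((cc U (R n x) + cc (R n) x) - (cc U (V x) + cc V x)) \<partial>M)"
      by (rule dd_cocycles[OF GG_D(2)[OF comp_GG[OF U R]] GG_D(2)[OF comp_GG[OF U V]]
          coc_comp[OF GG_D(3)[OF U] GG_D(3)[OF R] aR] coc_comp[OF GG_D(3)[OF U] GG_D(3)[OF V] aV]])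
    have iR: "integrable M (\<lambda>x. Phi (cc U (R n x)))"
      using iu integrable_aut[OF aR intPhi_meas[OF cu]] by simp
    have iV: "integrable M (\<lambda>x. Phi (cc U (V x)))"
      using iu integrable_aut[OF aV intPhi_meas[OF cu]] by simp
    have i1: "integrable M (\<lambda>x. Phi (cc U (R n x)) * indicator (E n) x)"
      by (rule integrable_real_mult_indicator[OF E iR])
    have i2: "integrable M (\<lambda>x. Phi (cc U (V x)) * indicator (E n) x)"
      by (rule integrable_real_mult_indicator[OF E iV])
    have i3: "integrable M (\<lambda>x. Phi (cc (R n) x - cc V x))" by (rule GG_integrable_d[OF R V])
    have aeR: "AE x in M. R n x = tpow T (cc (R n) x) x" using GG_D(3)[OF R] by (simp add: is_cocycle_def)
    have aeV: "AE x in M. V x = tpow T (cc V x) x" using GG_D(3)[OF V] by (simp add: is_cocycle_def)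
    have pw: "AE x in M. Phi ((cc U (R n x) + cc (R n) x) - (cc U (V x) + cc V x))
        \<le> Phi (cc U (R n x)) * indicator (E n) x + Phi (cc U (V x)) * indicator (E n) x + Phi (cc (R n) x - cc V x)"
      using aeR aeV
    proof eventually_elim
      case (elim x)
      show ?case
      proof (cases "x \<in> E n")
        case True
        have "Phi ((cc U (R n x) + cc (R n) x) - (cc U (V x) + cc V x))
              = Phi ((cc U (R n x) - cc U (V x)) + (cc (R n) x - cc V x))" by (simp add: algebra_simps)
        also have "\<dots> \<le> Phi (cc U (R n x) - cc U (V x)) + Phi (cc (R n) x - cc V x)" by (rule Phi_add)
        also have "\<dots> \<le> Phi (cc U (R n x)) + Phi (cc U (V x)) + Phi (cc (R n) x - cc V x)"
          using Phi_diff by (simp add: add_right_mono)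
        finally show ?thesis using True by simp
      next
        case False
        then have "cc (R n) x = cc V x" by (simp add: E_def)
        then have "R n x = V x" using elim by simp
        then show ?thesis using False \<open>cc (R n) x = cc V x\<close> by (simp add: Phi_0)
      qed
    qed
    have "dd (U \<circ> R n) (U \<circ> V) \<le> (\<integral>x. Phi (cc U (R n x)) * indicator (E n) x + Phi (cc U (V x)) * indicator (E n) x + Phi (cc (R n) x - cc V x) \<partial>M)"
      unfolding eq
      by (rule integral_mono_AE[OF _ _ pw])
        (use i1 i2 i3 integrable_Phi_diff[OF intm_comp2[OF intm_meas[OF cu Rm] GG_D(4)[OF R], of "(+)"]
             intm_comp2[OF intm_meas[OF cu Vm] GG_D(4)[OF V], of "(+)"]
             integrable_Phi_add[OF intm_meas[OF cu Rm] GG_D(4)[OF R] iR GG_D(5)[OF R]]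
             integrable_Phi_add[OF intm_meas[OF cu Vm] GG_D(4)[OF V] iV GG_D(5)[OF V]]] in auto)
    also have "\<dots> = f1 n + f2 n + dd (R n) V"
      unfolding f1_def f2_def dd_def' using i1 i2 i3
      by (simp add: Bochner_Integration.integral_add)
    finally show ?thesis .
  qed
  show ?thesis
  proof (rule tendsto_sandwich[where f="\<lambda>n. 0" and h="\<lambda>n. f1 n + f2 n + dd (R n) V"])
    show "eventually (\<lambda>n. 0 \<le> dd (U \<circ> R n) (U \<circ> V)) sequentially" by (simp add: dd_nonneg)
    show "eventually (\<lambda>n. dd (U \<circ> R n) (U \<circ> V) \<le> f1 n + f2 n + dd (R n) V) sequentially"
      using bound by simp
    show "(\<lambda>n. 0::real) \<longlonglongrightarrow> 0" by simp
    show "(\<lambda>n. f1 n + f2 n + dd (R n) V) \<longlonglongrightarrow> 0"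
      using tendsto_add[OF tendsto_add[OF t1 t2] lim] by simp
  qed
qed

lemma mult_cont:
  assumes S: "\<And>n. S n \<in> GG" and R: "\<And>n. R n \<in> GG" and U: "U \<in> GG" and V: "V \<in> GG"
    and l1: "(\<lambda>n. dd (S n) U) \<longlonglongrightarrow> 0" and l2: "(\<lambda>n. dd (R n) V) \<longlonglongrightarrow> 0"
  shows "(\<lambda>n. dd (S n \<circ> R n) (U \<circ> V)) \<longlonglongrightarrow> 0"
proof (rule tendsto_sandwich[where f="\<lambda>n. 0" and h="\<lambda>n. dd (S n) U + dd (U \<circ> R n) (U \<circ> V)"])
  show "eventually (\<lambda>n. 0 \<le> dd (S n \<circ> R n) (U \<circ> V)) sequentially" by (simp add: dd_nonneg)
  have "dd (S n \<circ> R n) (U \<circ> V) \<le> dd (S n) U + dd (U \<circ> R n) (U \<circ> V)" for n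
  proof -
    have "dd (S n \<circ> R n) (U \<circ> V) \<le> dd (S n \<circ> R n) (U \<circ> R n) + dd (U \<circ> R n) (U \<circ> V)"
      by (rule dd_tri) (use comp_GG S R U V in auto)
    also have "dd (S n \<circ> R n) (U \<circ> R n) = dd (S n) U" by (rule dd_rinv[OF S U R])
    finally show ?thesis .
  qed
  then show "eventually (\<lambda>n. dd (S n \<circ> R n) (U \<circ> V) \<le> dd (S n) U + dd (U \<circ> R n) (U \<circ> V)) sequentially"
    by simp
  show "(\<lambda>n. 0::real) \<longlonglongrightarrow> 0" by simp
  show "(\<lambda>n. dd (S n) U + dd (U \<circ> R n) (U \<circ> V)) \<longlonglongrightarrow> 0"
    using tendsto_add[OF l1 left_cont[OF U V R l2]] by simp
qed

lemma inv_cont: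
  assumes S: "\<And>n. S n \<in> GG" and U: "U \<in> GG" and l1: "(\<lambda>n. dd (S n) U) \<longlonglongrightarrow> 0"
  shows "(\<lambda>n. dd (inv (S n)) (inv U)) \<longlonglongrightarrow> 0"
proof -
  have iU: "inv U \<in> GG" by (rule inv_GG[OF U])
  have "dd (inv (S n)) (inv U) = dd (inv U \<circ> S n) (inv U \<circ> U)" for n
  proof -
    have bS: "bij (S n)" using GG_D(1)[OF S] by (simp add: aut_def)
    have bU: "bij U" using GG_D(1)[OF U] by (simp add: aut_def)
    have "dd (inv (S n)) (inv U) = dd (inv (S n) \<circ> S n) (inv U \<circ> S n)"
      by (rule dd_rinv[OF inv_GG[OF S] iU S, symmetric])
    also have "inv (S n) \<circ> S n = id" using bS by (simp add: bij_is_inj)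
    also have "id = inv U \<circ> U" using bU by (simp add: bij_is_inj)
    finally show ?thesis by (rule trans[OF _ dd_sym])
  qed
  then show ?thesis using left_cont[OF iU U S l1] by simp
qed

end

lemma eventually_const_seq:
  assumes "eventually (\<lambda>k. f k = f (Suc k)) sequentially"
  shows "\<exists>N. \<forall>k\<ge>N. f k = f N"
proof -
  obtain N where N: "\<And>k. k \<ge> N \<Longrightarrow> f k = f (Suc k)" using assms unfolding eventually_sequentially by auto
  have "f (N + i) = f N" for i
  proof (induction i)
    case (Suc i)
    have "f (N + Suc i) = f (N + i)" using N[of "N + i"] by simp
    then show ?case using Suc by simp
  qed simp
  then have "\<forall>k\<ge>N. f k = f N" by (metis le_add_diff_inverse)
  then show ?thesis by blast
qed

context fgs
begin

lemma sets_UNIV[simp]: "UNIV \<in> sets M"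
  using sets.top[of M] by simp

lemma AE_piece:
  assumes "AE x in M. P x" shows "AE y in M. P (tpow T (c y) y)"
proof -
  have "AE y in M. P (tpow T j y)" for j by (rule AE_aut[OF aut_tpow[OF autT] assms])
  then have "AE y in M. \<forall>j. P (tpow T j y)" by (simp add: AE_all_countable)
  then show ?thesis by eventually_elim simp
qed

lemma limit_fun:
  assumes c: "\<And>k. intm M (c k)" and ev: "AE x in M. \<exists>N. \<forall>k\<ge>N. c k x = c N x"
  shows "\<exists>C. intm M C \<and> (AE x in M. eventually (\<lambda>k. c k x = C x) sequentially)"
proof -
  define P where "P N x = (\<forall>k\<ge>N. c k x = c N x)" for N x
  define L where "L x = (LEAST N. P N x)" for x
  define C where "C x = c (L x) x" for x
  have setP: "{x. P N x} \<in> sets M" for N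
  proof -
    have "{x. P N x} = (\<Inter>k\<in>{N..}. {x \<in> space M. c k x = c N x})" by (auto simp: P_def)
    also have "\<dots> \<in> sets M"
      by (rule sets.countable_INT'') (use pred_intm2[OF c c] in auto)
    finally show ?thesis .
  qed
  have Pm: "(\<lambda>x. P N x) \<in> M \<rightarrow>\<^sub>M count_space UNIV" for N
    using setP[of N] by (simp add: pred_def)
  have Lm: "L \<in> M \<rightarrow>\<^sub>M count_space UNIV"
    unfolding L_def by (rule measurable_Least[OF Pm])
  have Cm: "intm M C"
    unfolding C_def by (rule measurable_compose_countable[where f="\<lambda>N x. c N x", OF c Lm])
  have "AE x in M. eventually (\<lambda>k. c k x = C x) sequentially"
    using ev
  proof eventually_elim
    case (elim x)
    then have "\<exists>N. P N x" by (simp add: P_def)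
    then have "P (L x) x" unfolding L_def by (rule LeastI_ex)
    then show ?case unfolding eventually_sequentially C_def P_def by blast
  qed
  then show ?thesis using Cm by blast
qed

lemma core_complete:
  assumes s: "\<And>k. s k \<in> GG" and small: "\<And>k. dd (s k) (s (Suc k)) \<le> (1/2)^k"
  shows "\<exists>U C. aut M U \<and> is_cocycle M T U C \<and> intm M C
     \<and> (AE x in M. eventually (\<lambda>k. cc (s k) x = C x) sequentially)"
proof -
  define c where "c k = cc (s k)" for k
  define ci where "ci k = cc (inv (s k))" for k
  have cm: "intm M (c k)" for k unfolding c_def by (rule GG_D(4)[OF s])
  have cim: "intm M (ci k)" for k unfolding ci_def by (rule GG_D(4)[OF inv_GG[OF s]])
  have as: "aut M (s k)" for k by (rule GG_D(1)[OF s])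
  have bs: "bij (s k)" for k using as[of k] by (simp add: aut_def)
  define B where "B k = {x. c k x \<noteq> c (Suc k) x}" for k
  have Bs: "B k \<in> sets M" for k unfolding B_def c_def by (rule meas_neq_le(1)[OF s s])
  have Bm: "measure M (B k) \<le> (1/2)^k / \<phi> 1" for k
  proof -
    have "\<phi> 1 * measure M (B k) \<le> (1/2)^k"
      using meas_neq_le(2)[OF s s, of k "Suc k"] small[of k] unfolding B_def c_def by linarith
    then show ?thesis using phi1_pos by (simp add: field_simps mult.commute)
  qed
  have "\<forall>k. \<exists>Nk. Nk \<in> sets M \<and> emeasure M Nk = 0 \<and>
      {x. \<not> (s k x = tpow T (c k x) x \<and> s (Suc k) x = tpow T (c (Suc k) x) x)} \<subseteq> Nk"
  proof
    fix k
    have "AE x in M. s k x = tpow T (c k x) x \<and> s (Suc k) x = tpow T (c (Suc k) x) x"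
      using GG_D(3)[OF s, of k] GG_D(3)[OF s, of "Suc k"] unfolding c_def is_cocycle_def by auto
    then obtain Nk where "{x \<in> space M. \<not> (s k x = tpow T (c k x) x \<and> s (Suc k) x = tpow T (c (Suc k) x) x)} \<subseteq> Nk"
      "emeasure M Nk = 0" "Nk \<in> sets M" by (rule AE_E)
    then show "\<exists>Nk. Nk \<in> sets M \<and> emeasure M Nk = 0 \<and>
      {x. \<not> (s k x = tpow T (c k x) x \<and> s (Suc k) x = tpow T (c (Suc k) x) x)} \<subseteq> Nk" by auto
  qed
  then have "\<exists>N. \<forall>k. N k \<in> sets M \<and> emeasure M (N k) = 0 \<and>
      {x. \<not> (s k x = tpow T (c k x) x \<and> s (Suc k) x = tpow T (c (Suc k) x) x)} \<subseteq> N k"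
    by (rule choice)
  then obtain N where Nall: "\<forall>k. N k \<in> sets M \<and> emeasure M (N k) = 0 \<and>
      {x. \<not> (s k x = tpow T (c k x) x \<and> s (Suc k) x = tpow T (c (Suc k) x) x)} \<subseteq> N k"
    by blast
  have Ns: "\<And>k. N k \<in> sets M" and N0: "\<And>k. emeasure M (N k) = 0" using Nall by auto
  have Nc: "\<And>k x. \<not> (s k x = tpow T (c k x) x \<and> s (Suc k) x = tpow T (c (Suc k) x) x) \<Longrightarrow> x \<in> N k"
    using Nall by blast
  define D where "D k = B k \<union> s k ` (B k \<union> N k)" for k
  have BN: "B k \<union> N k \<in> sets M" for k using Bs Ns by auto
  have Ds: "D k \<in> sets M" for k unfolding D_def using Bs img_sets(1)[OF as BN] by auto
  have Dm: "measure M (D k) \<le> 2 * ((1/2)^k / \<phi> 1)" for k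
  proof -
    have "measure M (D k) \<le> measure M (B k) + measure M (s k ` (B k \<union> N k))"
      unfolding D_def by (rule measure_Un_le[OF Bs img_sets(1)[OF as BN]])
    also have "measure M (s k ` (B k \<union> N k)) = measure M (B k \<union> N k)" by (rule img_sets(2)[OF as BN])
    also have "measure M (B k \<union> N k) \<le> measure M (B k) + measure M (N k)" by (rule measure_Un_le[OF Bs Ns])
    also have "measure M (N k) = 0" using N0[of k] by (simp add: measure_def)
    finally show ?thesis using Bm[of k] by simp
  qed
  have sumD: "summable (\<lambda>k. measure M (D k))"
  proof (rule summable_comparison_test)
    show "\<exists>N. \<forall>n\<ge>N. norm (measure M (D n)) \<le> 2 * ((1/2)^n / \<phi> 1)" using Dm by auto
    show "summable (\<lambda>n. 2 * ((1/2::real)^n / \<phi> 1))"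
      by (intro summable_mult summable_divide summable_geometric) simp
  qed
  have BC: "AE x in M. eventually (\<lambda>k. x \<in> space M - D k) sequentially"
    by (rule borel_cantelli_AE1[OF Ds _ sumD]) (simp add: emeasure_finite less_top[symmetric])
  have F1: "AE x in M. \<forall>k. s k x = tpow T (c k x) x"
    using GG_D(3)[OF s] unfolding c_def is_cocycle_def by (simp add: AE_all_countable)
  have F2: "AE x in M. \<forall>k. inv (s k) x = tpow T (ci k x) x"
    using GG_D(3)[OF inv_GG[OF s]] unfolding ci_def is_cocycle_def by (simp add: AE_all_countable)
  have ev_c: "AE x in M. \<exists>K. \<forall>k\<ge>K. c k x = c K x"
    using BC
  proof eventually_elim
    case (elim x)
    then have "eventually (\<lambda>k. c k x = c (Suc k) x) sequentially"
      by eventually_elim (auto simp: D_def B_def)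
    then show ?case by (rule eventually_const_seq)
  qed
  have ev_ci: "AE x in M. \<exists>K. \<forall>k\<ge>K. ci k x = ci K x"
    using BC F2 uniq
  proof eventually_elim
    case (elim x)
    note outer = elim
    have "eventually (\<lambda>k. ci k x = ci (Suc k) x) sequentially"
      using outer(1)
    proof eventually_elim
      case (elim k)
      define x' where "x' = inv (s k) x"
      have sx': "s k x' = x" unfolding x'_def using bs[of k] by (simp add: bij_is_surj surj_f_inv_f)
      have "x' \<notin> B k \<union> N k"
      proof
        assume "x' \<in> B k \<union> N k"
        then have "s k x' \<in> s k ` (B k \<union> N k)" by blast
        then show False using elim sx' by (auto simp: D_def)
      qed
      then have "c k x' = c (Suc k) x'" and "s k x' = tpow T (c k x') x'"
        and "s (Suc k) x' = tpow T (c (Suc k) x') x'"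
        using Nc[of k x'] by (auto simp: B_def)
      then have "s (Suc k) x' = x" using sx' by simp
      then have "inv (s (Suc k)) x = x'" using bs[of "Suc k"] by (auto simp: bij_is_inj)
      then have "inv (s (Suc k)) x = inv (s k) x" by (simp add: x'_def)
      then have "tpow T (ci (Suc k) x) x = tpow T (ci k x) x" using outer(2) by metis
      then show ?case using outer(3) by metis
    qed
    then show ?case by (rule eventually_const_seq)
  qed
  obtain C where Cm: "intm M C" and evC: "AE x in M. eventually (\<lambda>k. c k x = C x) sequentially"
    using limit_fun[OF cm ev_c] by blast
  obtain Ci where Cim: "intm M Ci" and evCi: "AE x in M. eventually (\<lambda>k. ci k x = Ci x) sequentially"
    using limit_fun[OF cim ev_ci] by blast
  define U0 where "U0 x = tpow T (C x) x" for x
  define V0 where "V0 x = tpow T (Ci x) x" for x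
  define E0 where "E0 x \<longleftrightarrow> eventually (\<lambda>k. s k x = U0 x) sequentially \<and> eventually (\<lambda>k. inv (s k) x = V0 x) sequentially" for x
  have E0: "AE x in M. E0 x"
    using F1 F2 evC evCi
  proof eventually_elim
    case (elim x)
    have "eventually (\<lambda>k. s k x = U0 x) sequentially"
      using elim(3) by eventually_elim (use elim(1) in \<open>simp add: U0_def\<close>)
    moreover have "eventually (\<lambda>k. inv (s k) x = V0 x) sequentially"
      using elim(4) by eventually_elim (use elim(2) in \<open>simp add: V0_def\<close>)
    ultimately show ?case by (simp add: E0_def)
  qed
  have UV: "AE y in M. U0 (V0 y) = y"
  proof -
    have "AE y in M. E0 (V0 y)" unfolding V0_def by (rule AE_piece[OF E0])
    then show ?thesis using E0
    proof eventually_elim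
      case (elim y)
      have "eventually (\<lambda>k. inv (s k) y = V0 y \<and> s k (V0 y) = U0 (V0 y)) sequentially"
        by (intro eventually_conj) (use elim in \<open>auto simp: E0_def\<close>)
      then obtain k where "inv (s k) y = V0 y" "s k (V0 y) = U0 (V0 y)"
        unfolding eventually_sequentially by auto
      then show ?case using bs[of k] by (metis bij_is_surj surj_f_inv_f)
    qed
  qed
  have VU: "AE y in M. V0 (U0 y) = y"
  proof -
    have "AE y in M. E0 (U0 y)" unfolding U0_def by (rule AE_piece[OF E0])
    then show ?thesis using E0
    proof eventually_elim
      case (elim y)
      have "eventually (\<lambda>k. s k y = U0 y \<and> inv (s k) (U0 y) = V0 (U0 y)) sequentially"
        by (intro eventually_conj) (use elim in \<open>auto simp: E0_def\<close>)
      then obtain k where "s k y = U0 y" "inv (s k) (U0 y) = V0 (U0 y)"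
        unfolding eventually_sequentially by auto
      then show ?case using bs[of k] by (metis bij_is_inj inv_f_f)
    qed
  qed
  have "AE y in M. U0 (V0 y) = y \<and> V0 (U0 y) = y" using UV VU by eventually_elim simp
  then obtain N0 where N0c: "{y \<in> space M. \<not> (U0 (V0 y) = y \<and> V0 (U0 y) = y)} \<subseteq> N0"
    and N0z: "emeasure M N0 = 0" and N0s: "N0 \<in> sets M" by (rule AE_E)
  define Y where "Y = {x. \<forall>j. tpow T j x \<notin> N0}"
  have Ysets: "Y \<in> sets M"
  proof -
    have "Y = (\<Inter>j. tpow T j -` (UNIV - N0) \<inter> space M)" by (auto simp: Y_def)
    also have "\<dots> \<in> sets M"
      by (rule sets.countable_INT'') (use measurable_sets[OF tpow_meas[OF autT] sets.Diff[OF sets_UNIV N0s]] in auto)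
    finally show ?thesis .
  qed
  have Yae: "AE x in M. x \<in> Y"
  proof -
    have "AE x in M. tpow T j x \<notin> N0" for j
    proof -
      have "AE x in M. x \<notin> N0" using N0z N0s by (intro AE_I'[of N0]) auto
      then show ?thesis by (rule AE_aut[OF aut_tpow[OF autT]])
    qed
    then have "AE x in M. \<forall>j. tpow T j x \<notin> N0" by (simp add: AE_all_countable)
    then show ?thesis by (simp add: Y_def)
  qed
  have Y_good: "U0 (V0 x) = x \<and> V0 (U0 x) = x" if "x \<in> Y" for x
  proof -
    have "tpow T 0 x \<notin> N0" using that unfolding Y_def by blast
    then show ?thesis using N0c by auto
  qed
  have U0Y: "U0 x \<in> Y" if "x \<in> Y" for x
    using that by (auto simp: Y_def U0_def tpow_add_app[OF bijT, symmetric])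
  have V0Y: "V0 x \<in> Y" if "x \<in> Y" for x
    using that by (auto simp: Y_def V0_def tpow_add_app[OF bijT, symmetric])
  define U where "U x = (if x \<in> Y then U0 x else x)" for x
  define V where "V x = (if x \<in> Y then V0 x else x)" for x
  have UVx: "U (V x) = x" for x using Y_good V0Y by (auto simp: U_def V_def)
  have VUx: "V (U x) = x" for x using Y_good U0Y by (auto simp: U_def V_def)
  have bU: "bij U" by (rule o_bij[of V]) (auto simp: UVx VUx fun_eq_iff)
  have iU: "inv U = V" by (rule inv_equality) (auto simp: UVx VUx)
  have U0m: "U0 \<in> M \<rightarrow>\<^sub>M M" unfolding U0_def by (rule piece_meas[OF autT Cm])
  have V0m: "V0 \<in> M \<rightarrow>\<^sub>M M" unfolding V0_def by (rule piece_meas[OF autT Cim])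
  have Um: "U \<in> M \<rightarrow>\<^sub>M M" unfolding U_def
    by (rule measurable_If_set[OF U0m measurable_ident_sets[OF refl]]) (use Ysets in simp)
  have Vm: "V \<in> M \<rightarrow>\<^sub>M M" unfolding V_def
    by (rule measurable_If_set[OF V0m measurable_ident_sets[OF refl]]) (use Ysets in simp)
  have evU: "AE x in M. eventually (\<lambda>k. s k x = U x) sequentially"
    using E0 Yae by eventually_elim (simp add: E0_def U_def)
  have mpres: "measure M (U -` A) = measure M A" if A: "A \<in> sets M" for A
  proof -
    have UA: "U -` A \<in> sets M" using measurable_sets[OF Um A] by simp
    have lim: "(\<lambda>k. \<integral>x. (indicator A (s k x) :: real) \<partial>M) \<longlonglongrightarrow> (\<integral>x. (indicator A (U x) :: real) \<partial>M)"
    proof (rule integral_dominated_convergence[where w="\<lambda>x. 1"])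
      show "(\<lambda>x. indicator A (U x) :: real) \<in> borel_measurable M"
        using UA by (simp add: indicator_vimage[symmetric] borel_measurable_indicator)
      show "(\<lambda>x. indicator A (s k x) :: real) \<in> borel_measurable M" for k
        using measurable_sets[OF GG_D(1)[OF s, unfolded aut_def, THEN conjunct2, THEN conjunct1] A]
        by (simp add: indicator_vimage[symmetric] borel_measurable_indicator)
      show "integrable M (\<lambda>x. 1::real)" by simp
      show "AE x in M. (\<lambda>k. indicator A (s k x) :: real) \<longlonglongrightarrow> indicator A (U x)"
        using evU
      proof eventually_elim
        case (elim x)
        then have "eventually (\<lambda>k. (indicator A (s k x) :: real) = indicator A (U x)) sequentially"
          by eventually_elim simp
        then show ?case by (rule tendsto_eventually)
      qed
      show "AE x in M. norm (indicator A (s k x) :: real) \<le> 1" for k by (simp add: indicator_def)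
    qed
    have "(\<integral>x. (indicator A (s k x) :: real) \<partial>M) = measure M A" for k
    proof -
      have "(\<integral>x. (indicator A (s k x) :: real) \<partial>M) = (\<integral>x. (indicator A x :: real) \<partial>M)"
        by (rule integral_aut[OF as]) (use A in simp)
      then show ?thesis using A by simp
    qed
    then have "(\<lambda>k. \<integral>x. (indicator A (s k x) :: real) \<partial>M) \<longlonglongrightarrow> measure M A" by simp
    then have "(\<integral>x. (indicator A (U x) :: real) \<partial>M) = measure M A" using lim LIMSEQ_unique by blast
    moreover have "(\<integral>x. (indicator A (U x) :: real) \<partial>M) = measure M (U -` A)"
      using UA by (simp add: indicator_vimage[symmetric])
    ultimately show ?thesis by simp
  qed
  have dU: "distr M M U = M"
  proof (rule measure_eqI)
    show "sets (distr M M U) = sets M" by simp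
    fix A assume "A \<in> sets (distr M M U)"
    then have A: "A \<in> sets M" by simp
    have "emeasure (distr M M U) A = emeasure M (U -` A \<inter> space M)" by (rule emeasure_distr[OF Um A])
    also have "\<dots> = emeasure M A" using mpres[OF A] by (simp add: emeasure_eq_measure)
    finally show "emeasure (distr M M U) A = emeasure M A" .
  qed
  have aU: "aut M U" unfolding aut_def using bU Um Vm iU dU by simp
  have cocU: "is_cocycle M T U C"
  proof -
    have "AE x in M. U x = tpow T (C x) x" using Yae by eventually_elim (simp add: U_def U0_def)
    then show ?thesis using Cm by (simp add: is_cocycle_def)
  qed
  have "AE x in M. eventually (\<lambda>k. cc (s k) x = C x) sequentially"
    using evC by (simp add: c_def)
  then show ?thesis using aU cocU Cm by blast
qed

end

context fgs
begin

lemma complete_GG: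
  assumes S: "\<And>n. S n \<in> GG" and cau: "\<forall>e>0. \<exists>N. \<forall>m\<ge>N. \<forall>n\<ge>N. dd (S m) (S n) < e"
  shows "\<exists>U\<in>GG. (\<lambda>n. dd (S n) U) \<longlonglongrightarrow> 0"
proof -
  have "\<forall>k. \<exists>N. \<forall>m\<ge>N. \<forall>n\<ge>N. dd (S m) (S n) < (1/2::real)^k"
    using cau by simp
  then have "\<exists>Nf. \<forall>k. \<forall>m\<ge>Nf k. \<forall>n\<ge>Nf k. dd (S m) (S n) < (1/2::real)^k"
    by (rule choice)
  then obtain Nf where Nf: "\<And>k m n. m \<ge> Nf k \<Longrightarrow> n \<ge> Nf k \<Longrightarrow> dd (S m) (S n) < (1/2::real)^k"
    by blast
  define \<sigma> where "\<sigma> k = (\<Sum>i\<le>k. Nf i)" for k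
  have \<sigma>mono: "\<sigma> k \<le> \<sigma> k'" if "k \<le> k'" for k k'
    unfolding \<sigma>_def by (rule sum_mono2) (use that in auto)
  have \<sigma>ge: "Nf k \<le> \<sigma> k" for k
    unfolding \<sigma>_def by (rule member_le_sum) auto
  define s where "s k = S (\<sigma> k)" for k
  have s: "s k \<in> GG" for k unfolding s_def by (rule S)
  have small: "dd (s k) (s (Suc k)) \<le> (1/2)^k" for k
  proof -
    have "\<sigma> k \<ge> Nf k" "\<sigma> (Suc k) \<ge> Nf k" using \<sigma>ge[of k] \<sigma>mono[of k "Suc k"] by auto
    then show ?thesis unfolding s_def using Nf[of k "\<sigma> k" "\<sigma> (Suc k)"] by simp
  qed
  obtain U C where aU: "aut M U" and cocU: "is_cocycle M T U C" and Cm: "intm M C"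
    and evC: "AE x in M. eventually (\<lambda>k. cc (s k) x = C x) sequentially"
    using core_complete[OF s small] by blast
  have fgU: "U \<in> full_group M T" using aU cocU by (auto simp: full_group_def)
  have fat: "integrable M (\<lambda>x. Phi (cc (S n) x - C x)) \<and> (\<integral>x. Phi (cc (S n) x - C x) \<partial>M) \<le> (1/2)^m"
    if nm: "n \<ge> \<sigma> m" for n m
  proof -
    define u where "u j x = ennreal (Phi (cc (S n) x - cc (s j) x))" for j x
    have fm: "(\<lambda>x. Phi (cc (S n) x - C x)) \<in> borel_measurable M"
      using intPhi_meas[OF intm_comp2[OF GG_D(4)[OF S] Cm, of "(-)"]] by simp
    have um: "u j \<in> borel_measurable M" for j
      unfolding u_def
      using measurable_compose[OF intPhi_meas[OF intm_comp2[OF GG_D(4)[OF S] GG_D(4)[OF s], of "(-)"]] measurable_ennreal]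
      by simp
    have li: "AE x in M. liminf (\<lambda>j. u j x) = ennreal (Phi (cc (S n) x - C x))"
      using evC
    proof eventually_elim
      case (elim x)
      then have "eventually (\<lambda>j. u j x = ennreal (Phi (cc (S n) x - C x))) sequentially"
        by eventually_elim (simp add: u_def)
      then have "(\<lambda>j. u j x) \<longlonglongrightarrow> ennreal (Phi (cc (S n) x - C x))" by (rule tendsto_eventually)
      then show ?case by (intro lim_imp_Liminf) auto
    qed
    have ui: "integral\<^sup>N M (u j) = ennreal (dd (S n) (s j))" for j
      unfolding u_def dd_def'
      by (rule nn_integral_eq_integral[OF GG_integrable_d[OF S s]]) (simp add: Phi_nonneg)
    have ev: "eventually (\<lambda>j. integral\<^sup>N M (u j) \<le> ennreal ((1/2)^m)) sequentially"
      unfolding eventually_sequentially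
    proof (intro exI allI impI)
      fix j assume "j \<ge> m"
      then have "\<sigma> j \<ge> Nf m" using \<sigma>mono[of m j] \<sigma>ge[of m] by simp
      moreover have "n \<ge> Nf m" using nm \<sigma>ge[of m] by simp
      ultimately have "dd (S n) (s j) < (1/2)^m" unfolding s_def using Nf by blast
      then show "integral\<^sup>N M (u j) \<le> ennreal ((1/2)^m)" unfolding ui by simp
    qed
    have "(\<integral>\<^sup>+x. ennreal (Phi (cc (S n) x - C x)) \<partial>M) = (\<integral>\<^sup>+x. liminf (\<lambda>j. u j x) \<partial>M)"
      using li by (intro nn_integral_cong_AE) auto
    also have "\<dots> \<le> liminf (\<lambda>j. integral\<^sup>N M (u j))" by (rule nn_integral_liminf[OF um])
    also have "\<dots> \<le> liminf (\<lambda>j. ennreal ((1/2)^m))" by (rule Liminf_mono[OF ev])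
    also have "\<dots> = ennreal ((1/2)^m)" by (rule Liminf_const) simp
    finally have b: "(\<integral>\<^sup>+x. ennreal (Phi (cc (S n) x - C x)) \<partial>M) \<le> ennreal ((1/2)^m)" .
    have int: "integrable M (\<lambda>x. Phi (cc (S n) x - C x))"
      unfolding integrable_iff_bounded
      using fm b by (simp add: abs_of_nonneg[OF Phi_nonneg]) (metis ennreal_less_top order.strict_trans1)
    have "(\<integral>\<^sup>+x. ennreal (Phi (cc (S n) x - C x)) \<partial>M) = ennreal (\<integral>x. Phi (cc (S n) x - C x) \<partial>M)"
      by (rule nn_integral_eq_integral[OF int]) (simp add: Phi_nonneg)
    then have "(\<integral>x. Phi (cc (S n) x - C x) \<partial>M) \<le> (1/2)^m" using b by simp
    then show ?thesis using int by simp
  qed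
  have UG: "U \<in> GG"
  proof (rule GG_I[OF aU cocU])
    define a where "a = cc (S (\<sigma> 0))"
    have am: "intm M a" unfolding a_def by (rule GG_D(4)[OF S])
    have i1: "integrable M (\<lambda>x. Phi (a x - C x))" using fat[OF order.refl, of 0] unfolding a_def by blast
    have eq: "(\<lambda>x. Phi (C x - a x)) = (\<lambda>x. Phi (a x - C x))"
      by (rule ext) (metis Phi_minus minus_diff_eq)
    have i2: "integrable M (\<lambda>x. Phi (C x - a x))" using i1 eq by simp
    have "integrable M (\<lambda>x. Phi ((C x - a x) + a x))"
      by (rule integrable_Phi_add[OF intm_comp2[OF Cm am, of "(-)"] am i2]) (simp add: a_def GG_D(5)[OF S])
    then show "integrable M (\<lambda>x. Phi (C x))" by simp
  qed
  have "(\<lambda>n. dd (S n) U) \<longlonglongrightarrow> 0"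
  proof (rule LIMSEQ_I)
    fix r :: real assume r: "r > 0"
    obtain m where m: "(1/2::real)^m < r" using real_arch_pow_inv[OF r, of "1/2"] by auto
    show "\<exists>no. \<forall>n\<ge>no. norm (dd (S n) U - 0) < r"
    proof (intro exI allI impI)
      fix n assume n: "n \<ge> \<sigma> m"
      have "dd (S n) U = (\<integral>x. Phi (cc (S n) x - C x) \<partial>M)"
        by (rule dd_cocycles[OF GG_D(2)[OF S] fgU GG_D(3)[OF S] cocU])
      then have "dd (S n) U \<le> (1/2)^m" using fat[OF n] by simp
      then show "norm (dd (S n) U - 0) < r" using m dd_nonneg[of "S n" U] by simp
    qed
  qed
  then show ?thesis using UG by blast
qed

end

context fgs
begin

lemma open_sets: "open X \<Longrightarrow> X \<in> sets M"
  using borel_open[of X] sets_M by simp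

lemma algebra_approx:
  obtains \<A> where "countable \<A>" "\<A> \<subseteq> sets M"
    "\<And>A \<delta>. A \<in> sets M \<Longrightarrow> \<delta> > 0 \<Longrightarrow> \<exists>B\<in>\<A>. measure M ((A - B) \<union> (B - A)) < \<delta>"
proof -
  obtain Bs :: "'a set set" where cB: "countable Bs" and tb: "topological_basis Bs"
    using ex_countable_basis by blast
  have Bs_open: "X \<in> Bs \<Longrightarrow> open X" for X using tb by (rule topological_basis_open)
  define \<A> where "\<A> = (\<lambda>L. \<Union>(set L)) ` lists Bs"
  have c\<A>: "countable \<A>" unfolding \<A>_def using cB by simp
  have s\<A>: "\<A> \<subseteq> sets M"
  proof
    fix X assume "X \<in> \<A>"
    then obtain L where L: "L \<in> lists Bs" "X = \<Union>(set L)" by (auto simp: \<A>_def)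
    have "\<Union>(set L) \<in> sets M"
      using L(1) by (intro sets.finite_Union) (auto intro: open_sets Bs_open)
    then show "X \<in> sets M" using L by simp
  qed
  have approx: "\<exists>B\<in>\<A>. measure M ((A - B) \<union> (B - A)) < \<delta>" if A: "A \<in> sets M" and d: "\<delta> > 0" for A \<delta>
  proof -
    have Ab: "A \<in> sets borel" using A sets_M by simp
    have "emeasure M A = (INF U \<in> {U. A \<subseteq> U \<and> open U}. emeasure M U)"
      by (rule outer_regular[OF sets_M _ Ab]) simp
    moreover have "emeasure M A < emeasure M A + ennreal (\<delta>/2)"
      using d by (simp add: emeasure_eq_measure ennreal_less_iff flip: ennreal_plus)
    ultimately have "(INF U \<in> {U. A \<subseteq> U \<and> open U}. emeasure M U) < emeasure M A + ennreal (\<delta>/2)" by simp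
    then obtain U where U: "A \<subseteq> U" "open U" and Ul: "emeasure M U < emeasure M A + ennreal (\<delta>/2)"
      by (auto simp: INF_less_iff)
    have Us: "U \<in> sets M" by (rule open_sets[OF U(2)])
    have "measure M U < measure M A + \<delta>/2"
      using Ul d by (simp add: emeasure_eq_measure ennreal_less_iff flip: ennreal_plus)
    then have UA: "measure M (U - A) < \<delta>/2"
      using finite_measure_Diff[OF Us A U(1)] by simp
    obtain B' where B': "B' \<subseteq> Bs" "\<Union>B' = U" using tb U(2) unfolding topological_basis_def by blast
    show ?thesis
    proof (cases "B' = {}")
      case True
      then have "U = {}" using B' by simp
      then have "A = {}" using U by simp
      moreover have "{} \<in> \<A>" unfolding \<A>_def by (rule image_eqI[where x="[]"]) auto
      ultimately show ?thesis using d by (intro bexI[of _ "{}"]) auto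
    next
      case False
      have cB': "countable B'" using countable_subset[OF B'(1) cB] .
      define f where "f = from_nat_into B'"
      have rf: "range f = B'" unfolding f_def using False cB' by simp
      define V where "V n = \<Union>(f ` {..<n})" for n
      have Vs: "V n \<in> sets M" for n
        unfolding V_def using rf B'(1) by (intro sets.finite_Union) (auto intro!: open_sets Bs_open)
      have Vinc: "incseq V" unfolding V_def incseq_def by (intro allI impI Union_mono image_mono) auto
      have VU: "(\<Union>n. V n) = U"
      proof
        show "(\<Union>n. V n) \<subseteq> U" using rf B'(2) by (auto simp: V_def)
        show "U \<subseteq> (\<Union>n. V n)"
        proof
          fix x assume "x \<in> U"
          then obtain i where "x \<in> f i" using B'(2) rf by auto
          then have "x \<in> V (Suc i)" by (auto simp: V_def)
          then show "x \<in> (\<Union>n. V n)" by blast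
        qed
      qed
      have lim: "(\<lambda>n. measure M (V n)) \<longlonglongrightarrow> measure M U"
        using finite_Lim_measure_incseq[of V] Vs Vinc VU by auto
      have "measure M U - \<delta>/2 < measure M U" using d by simp
      from order_tendstoD(1)[OF lim this] obtain n where n: "measure M (V n) > measure M U - \<delta>/2"
        by (auto simp: eventually_sequentially)
      have VsubU: "V n \<subseteq> U" using rf B'(2) by (auto simp: V_def)
      have UV: "measure M (U - V n) < \<delta>/2"
        using finite_measure_Diff[OF Us Vs VsubU] n by simp
      have VA: "V n \<in> \<A>"
      proof -
        have "V n = \<Union>(set (map f [0..<n]))" by (auto simp: V_def)
        moreover have "f i \<in> Bs" for i using rf B'(1) by blast
        then have "map f [0..<n] \<in> lists Bs" by auto
        ultimately show ?thesis unfolding \<A>_def by blast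
      qed
      have "measure M ((A - V n) \<union> (V n - A)) \<le> measure M ((U - V n) \<union> (U - A))"
        by (rule finite_measure_mono) (use U(1) VsubU Us Vs A in auto)
      also have "\<dots> \<le> measure M (U - V n) + measure M (U - A)"
        by (rule measure_Un_le) (use Us Vs A in auto)
      also have "\<dots> < \<delta>" using UV UA by simp
      finally show ?thesis using VA by blast
    qed
  qed
  show ?thesis using that c\<A> s\<A> approx by blast
qed

end

definition gL :: "(int \<times> 'a set) list \<Rightarrow> 'a \<Rightarrow> int" where
  "gL L x = sum_list (map (\<lambda>(k, B). if x \<in> B then k else 0) L)"

definition bL :: "(int \<times> 'a set) list \<Rightarrow> int" where
  "bL L = sum_list (map (\<lambda>(k, B). \<bar>k\<bar>) L)"

lemma gL_Nil[simp]: "gL [] x = 0" by (simp add: gL_def)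
lemma gL_Cons[simp]: "gL ((k, B) # L) x = (if x \<in> B then k else 0) + gL L x" by (simp add: gL_def)
lemma bL_Nil[simp]: "bL [] = 0" by (simp add: bL_def)
lemma bL_Cons[simp]: "bL ((k, B) # L) = \<bar>k\<bar> + bL L" by (simp add: bL_def)

lemma gL_bound: "\<bar>gL L x\<bar> \<le> bL L"
proof (induction L)
  case (Cons p L)
  obtain k B where p: "p = (k, B)" by (cases p)
  have "\<bar>(if x \<in> B then k else 0) + gL L x\<bar> \<le> \<bar>if x \<in> B then k else 0\<bar> + \<bar>gL L x\<bar>"
    by (rule abs_triangle_ineq)
  moreover have "\<bar>if x \<in> B then k else (0::int)\<bar> \<le> \<bar>k\<bar>" by simp
  ultimately have "\<bar>(if x \<in> B then k else 0) + gL L x\<bar> \<le> \<bar>k\<bar> + bL L" using Cons.IH by linarith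
  then show ?case using p by simp
qed simp

lemma bL_nonneg: "bL L \<ge> 0"
  by (induction L) (auto simp: bL_def)

lemma gL_meas: "(\<And>p. p \<in> set L \<Longrightarrow> snd p \<in> sets M) \<Longrightarrow> intm M (gL L)"
proof (induction L)
  case Nil then show ?case by simp
next
  case (Cons p L)
  obtain k B where p: "p = (k, B)" by (cases p)
  have "snd p \<in> sets M" using Cons.prems by simp
  then have B: "B \<in> sets M" using p by simp
  have i1: "intm M (\<lambda>x. if x \<in> B then k else 0)"
    by (rule measurable_If_set) (use B in auto)
  have i2: "intm M (gL L)" using Cons by auto
  show ?case using intm_comp2[OF i1 i2, of "(+)"] p by simp
qed

context fgs
begin

lemma gL_int:
  assumes "\<And>p. p \<in> set L \<Longrightarrow> snd p \<in> sets M"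
  shows "integrable M (\<lambda>x. Phi (gL L x))"
proof (rule Bochner_Integration.integrable_bound[OF integrable_const[of "Phi (bL L)"]])
  show "(\<lambda>x. Phi (gL L x)) \<in> borel_measurable M" by (rule intPhi_meas[OF gL_meas[OF assms]])
  show "AE x in M. norm (Phi (gL L x)) \<le> norm (Phi (bL L))"
    using gL_bound[of L] bL_nonneg[of L]
    by (intro AE_I2) (simp add: abs_of_nonneg[OF Phi_nonneg] Phi_mono)
qed

lemma approx_fun:
  assumes c: "intm M c" and ic: "integrable M (\<lambda>x. Phi (c x))" and e: "e > 0"
    and sA: "\<A> \<subseteq> sets M"
    and apx: "\<And>A \<delta>. A \<in> sets M \<Longrightarrow> \<delta> > 0 \<Longrightarrow> \<exists>B\<in>\<A>. measure M ((A - B) \<union> (B - A)) < \<delta>"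
  shows "\<exists>L \<in> lists (UNIV \<times> \<A>). (\<integral>x. Phi (c x - gL L x) \<partial>M) < e"
proof -
  define cK where "cK K x = (if \<bar>c x\<bar> \<le> int K then c x else 0)" for K x
  have cKm: "intm M (cK K)" for K
    unfolding cK_def by (rule intm_comp1[OF c, of "\<lambda>v. if \<bar>v\<bar> \<le> int K then v else 0"])
  have dm: "(\<lambda>x. Phi (c x - cK K x)) \<in> borel_measurable M" for K
    using intPhi_meas[OF intm_comp2[OF c cKm, of "(-)"]] by simp
  have bnd: "AE x in M. norm (Phi (c x - cK K x)) \<le> Phi (c x)" for K
    by (intro AE_I2) (simp add: cK_def abs_of_nonneg[OF Phi_nonneg] Phi_0 Phi_nonneg)
  have conv: "(\<lambda>K. \<integral>x. Phi (c x - cK K x) \<partial>M) \<longlonglongrightarrow> (\<integral>x. 0 \<partial>M)"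
  proof (rule integral_dominated_convergence[where w="\<lambda>x. Phi (c x)"])
    show "(\<lambda>x. 0::real) \<in> borel_measurable M" by simp
    show "(\<lambda>x. Phi (c x - cK K x)) \<in> borel_measurable M" for K by (rule dm)
    show "integrable M (\<lambda>x. Phi (c x))" by (rule ic)
    show "AE x in M. (\<lambda>K. Phi (c x - cK K x)) \<longlonglongrightarrow> 0"
    proof (rule AE_I2)
      fix x
      have "eventually (\<lambda>K. Phi (c x - cK K x) = 0) sequentially"
        unfolding eventually_sequentially
      proof (intro exI allI impI)
        fix K assume "nat \<bar>c x\<bar> \<le> K"
        then have "\<bar>c x\<bar> \<le> int K" by linarith
        then show "Phi (c x - cK K x) = 0" by (simp add: cK_def Phi_0)
      qed
      then show "(\<lambda>K. Phi (c x - cK K x)) \<longlonglongrightarrow> 0" by (rule tendsto_eventually)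
    qed
    show "AE x in M. norm (Phi (c x - cK K x)) \<le> Phi (c x)" for K by (rule bnd)
  qed
  have e2: "0 < e/2" using e by simp
  have conv': "(\<lambda>K. \<integral>x. Phi (c x - cK K x) \<partial>M) \<longlonglongrightarrow> 0" using conv by simp
  obtain K where K: "(\<integral>x. Phi (c x - cK K x) \<partial>M) < e/2"
    using order_tendstoD(2)[OF conv' e2] unfolding eventually_sequentially by auto
  have iK: "integrable M (\<lambda>x. Phi (c x - cK K x))"
    by (rule Bochner_Integration.integrable_bound[OF ic dm]) (use bnd in \<open>auto simp: abs_of_nonneg[OF Phi_nonneg]\<close>)
  define I where "I = {- int K..int K}"
  have fI: "finite I" by (simp add: I_def)
  define Bd where "Bd = int K + (\<Sum>k\<in>I. \<bar>k\<bar>)"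
  define P where "P = Phi Bd"
  have P0: "P \<ge> 0" by (simp add: P_def Phi_nonneg)
  define \<delta> where "\<delta> = e / (2 * (P + 1) * (real (card I) + 1))"
  have \<delta>0: "\<delta> > 0" using e P0 by (simp add: \<delta>_def)
  define A where "A k = {x. c x = k}" for k
  have As: "A k \<in> sets M" for k using pred_intm2[OF c c, of "\<lambda>a b. a = k"] by (simp add: A_def)
  have "\<forall>k. \<exists>B. B \<in> \<A> \<and> measure M ((A k - B) \<union> (B - A k)) < \<delta>" using apx[OF As \<delta>0] by blast
  from choice[OF this] obtain \<beta> where \<beta>all: "\<forall>k. \<beta> k \<in> \<A> \<and> measure M ((A k - \<beta> k) \<union> (\<beta> k - A k)) < \<delta>"
    by blast
  have \<beta>A: "\<And>k. \<beta> k \<in> \<A>" and \<beta>m: "\<And>k. measure M ((A k - \<beta> k) \<union> (\<beta> k - A k)) < \<delta>"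
    using \<beta>all by auto
  have \<beta>s: "\<beta> k \<in> sets M" for k using \<beta>A sA by blast
  define L where "L = map (\<lambda>k. (k, \<beta> k)) [- int K..int K]"
  have Ll: "L \<in> lists (UNIV \<times> \<A>)" using \<beta>A by (auto simp: L_def)
  have Ls: "\<And>p. p \<in> set L \<Longrightarrow> snd p \<in> sets M" using \<beta>s by (auto simp: L_def)
  have gLx: "gL L x = (\<Sum>k\<in>I. if x \<in> \<beta> k then k else 0)" for x
  proof -
    have "gL L x = sum_list (map (\<lambda>k. if x \<in> \<beta> k then k else 0) [- int K..int K])"
      by (simp only: gL_def L_def map_map o_def prod.case)
    also have "\<dots> = (\<Sum>k\<in>I. if x \<in> \<beta> k then k else 0)"
      by (simp only: sum_list_distinct_conv_sum_set[OF distinct_upto] set_upto I_def)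
    finally show ?thesis .
  qed
  define Bad where "Bad = (\<Union>k\<in>I. (A k - \<beta> k) \<union> (\<beta> k - A k))"
  have Bads: "Bad \<in> sets M" unfolding Bad_def using fI As \<beta>s by (intro sets.finite_UN) auto
  have Badm: "measure M Bad \<le> real (card I) * \<delta>"
  proof -
    have "measure M Bad \<le> (\<Sum>k\<in>I. measure M ((A k - \<beta> k) \<union> (\<beta> k - A k)))"
      unfolding Bad_def by (rule measure_UNION_le[OF fI]) (use As \<beta>s in auto)
    also have "\<dots> \<le> (\<Sum>k\<in>I. \<delta>)" by (rule sum_mono) (use \<beta>m in \<open>simp add: less_imp_le\<close>)
    finally show ?thesis by simp
  qed
  have agree: "cK K x = gL L x" if "x \<notin> Bad" for x
  proof -
    have "x \<in> \<beta> k \<longleftrightarrow> c x = k" if k: "k \<in> I" for k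
    proof -
      have "x \<notin> (A k - \<beta> k) \<union> (\<beta> k - A k)" using \<open>x \<notin> Bad\<close> k unfolding Bad_def by blast
      then show ?thesis unfolding A_def by blast
    qed
    then have "gL L x = (\<Sum>k\<in>I. if c x = k then k else 0)" unfolding gLx by (intro sum.cong) auto
    also have "\<dots> = (if c x \<in> I then c x else 0)"
      using fI by (simp add: sum.delta)
    also have "\<dots> = cK K x" unfolding cK_def I_def by (simp add: abs_le_iff)
    finally show ?thesis by simp
  qed
  have gb: "\<bar>gL L x\<bar> \<le> (\<Sum>k\<in>I. \<bar>k\<bar>)" for x
  proof -
    have "\<bar>gL L x\<bar> \<le> (\<Sum>k\<in>I. \<bar>if x \<in> \<beta> k then k else 0\<bar>)" unfolding gLx by (rule sum_abs)
    also have "\<dots> \<le> (\<Sum>k\<in>I. \<bar>k\<bar>)" by (rule sum_mono) auto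
    finally show ?thesis .
  qed
  have pw: "Phi (cK K x - gL L x) \<le> P * indicator Bad x" for x
  proof (cases "x \<in> Bad")
    case True
    have "\<bar>cK K x\<bar> \<le> int K" by (simp add: cK_def)
    moreover have "\<bar>cK K x - gL L x\<bar> \<le> \<bar>cK K x\<bar> + \<bar>gL L x\<bar>" by (rule abs_triangle_ineq4)
    moreover have "(\<Sum>k\<in>I. \<bar>k\<bar>) \<ge> 0" by (rule sum_nonneg) simp
    ultimately have "\<bar>cK K x - gL L x\<bar> \<le> \<bar>Bd\<bar>" using gb[of x] unfolding Bd_def by linarith
    then show ?thesis using True by (simp add: P_def Phi_mono)
  next
    case False
    then show ?thesis using agree[OF False] by (simp add: Phi_0)
  qed
  have iG: "integrable M (\<lambda>x. Phi (gL L x))" by (rule gL_int[OF Ls])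
  have icK: "integrable M (\<lambda>x. Phi (cK K x))"
    by (rule Bochner_Integration.integrable_bound[OF ic intPhi_meas[OF cKm]])
      (auto intro!: AE_I2 simp: abs_of_nonneg[OF Phi_nonneg] cK_def Phi_nonneg Phi_0)
  have i2: "integrable M (\<lambda>x. Phi (cK K x - gL L x))"
    by (rule integrable_Phi_diff[OF cKm gL_meas[OF Ls] icK iG])
  have fin: "emeasure M Bad < \<infinity>" using emeasure_finite[of Bad] by (simp add: less_top[symmetric])
  have iP: "integrable M (\<lambda>x. P * indicator Bad x)"
    using integrable_real_indicator[OF Bads fin] by (rule Bochner_Integration.integrable_mult_right)
  have "(\<integral>x. Phi (cK K x - gL L x) \<partial>M) \<le> (\<integral>x. P * indicator Bad x \<partial>M)"
    by (rule integral_mono[OF i2 iP pw])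
  also have "\<dots> = P * measure M Bad" using Bads by simp
  also have "\<dots> \<le> P * (real (card I) * \<delta>)" by (rule mult_left_mono[OF Badm P0])
  also have "\<dots> < e/2"
  proof -
    have "P * (real (card I) * \<delta>) = e/2 * (P * real (card I) / ((P + 1) * (real (card I) + 1)))"
      using P0 by (simp add: \<delta>_def field_simps)
    also have "\<dots> < e/2 * 1"
    proof (rule mult_strict_left_mono)
      have "P * real (card I) < (P + 1) * (real (card I) + 1)" using P0 by (simp add: algebra_simps)
      then show "P * real (card I) / ((P + 1) * (real (card I) + 1)) < 1" using P0 by simp
    qed (use e in simp)
    finally show ?thesis by simp
  qed
  finally have b2: "(\<integral>x. Phi (cK K x - gL L x) \<partial>M) < e/2" .
  have "(\<integral>x. Phi (c x - gL L x) \<partial>M) \<le> (\<integral>x. Phi (c x - cK K x) + Phi (cK K x - gL L x) \<partial>M)"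
    by (rule integral_mono[OF integrable_Phi_diff[OF c gL_meas[OF Ls] ic iG] Bochner_Integration.integrable_add[OF iK i2]])
      (auto intro: Phi_tri)
  also have "\<dots> = (\<integral>x. Phi (c x - cK K x) \<partial>M) + (\<integral>x. Phi (cK K x - gL L x) \<partial>M)"
    by (rule Bochner_Integration.integral_add[OF iK i2])
  also have "\<dots> < e" using K b2 by simp
  finally show ?thesis using Ll by blast
qed

lemma separable_GG:
  "\<exists>D\<subseteq>GG. countable D \<and> (\<forall>U\<in>GG. \<forall>e>0. \<exists>V\<in>D. dd U V < e)"
proof -
  obtain \<A> where c\<A>: "countable \<A>" and s\<A>: "\<A> \<subseteq> sets M"
    and apx: "\<And>A \<delta>. A \<in> sets M \<Longrightarrow> \<delta> > 0 \<Longrightarrow> \<exists>B\<in>\<A>. measure M ((A - B) \<union> (B - A)) < \<delta>"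
    by (rule algebra_approx) blast
  define Ls where "Ls = lists ((UNIV :: int set) \<times> \<A>)"
  have cLs: "countable Ls" unfolding Ls_def using c\<A> by simp
  have Lss: "\<And>p. p \<in> set L \<Longrightarrow> snd p \<in> sets M" if "L \<in> Ls" for L
    using that s\<A> by (auto simp: Ls_def)
  define Q where "Q L q \<longleftrightarrow> (\<exists>V\<in>GG. (\<integral>x. Phi (cc V x - gL L x) \<partial>M) < q)" for L q
  define pick where "pick L q = (SOME V. V \<in> GG \<and> (\<integral>x. Phi (cc V x - gL L x) \<partial>M) < q)" for L q
  define Idx where "Idx = {(L, q). L \<in> Ls \<and> q \<in> \<rat> \<and> Q L q}"
  define D where "D = (\<lambda>(L, q). pick L q) ` Idx"
  have pick: "pick L q \<in> GG \<and> (\<integral>x. Phi (cc (pick L q) x - gL L x) \<partial>M) < q" if Qh: "Q L q" for L q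
  proof -
    obtain V0 where "V0 \<in> GG \<and> (\<integral>x. Phi (cc V0 x - gL L x) \<partial>M) < q" using Qh by (auto simp: Q_def)
    then show ?thesis unfolding pick_def
      by (rule someI[where P="\<lambda>V. V \<in> GG \<and> (\<integral>x. Phi (cc V x - gL L x) \<partial>M) < q"])
  qed
  have DG: "D \<subseteq> GG" unfolding D_def Idx_def using pick by auto
  have cD: "countable D"
  proof -
    have "Idx \<subseteq> Ls \<times> \<rat>" by (auto simp: Idx_def)
    moreover have "countable (Ls \<times> \<rat>)" using cLs countable_rat by blast
    ultimately have "countable Idx" by (rule countable_subset)
    then show ?thesis unfolding D_def by simp
  qed
  have dense: "\<exists>V\<in>D. dd U V < e" if U: "U \<in> GG" and e: "e > 0" for U e
  proof -
    have e3: "e/3 > 0" using e by simp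
    obtain L where L: "L \<in> Ls" and Lb: "(\<integral>x. Phi (cc U x - gL L x) \<partial>M) < e/3"
      using approx_fun[OF GG_D(4)[OF U] GG_D(5)[OF U] e3 s\<A> apx] by (auto simp: Ls_def)
    obtain q where q: "q \<in> \<rat>" "e/3 < q" "q < 2*e/3"
      using Rats_dense_in_real[of "e/3" "2*e/3"] e by auto
    have QL: "Q L q" unfolding Q_def using U Lb q(2) by (intro bexI[of _ U]) simp_all
    define V where "V = pick L q"
    have V: "V \<in> GG" and Vb: "(\<integral>x. Phi (cc V x - gL L x) \<partial>M) < q"
      using pick[OF QL] by (auto simp: V_def)
    have VD: "V \<in> D" unfolding D_def V_def Idx_def using L q(1) QL by force
    have gm: "intm M (gL L)" by (rule gL_meas[OF Lss[OF L]])
    have gi: "integrable M (\<lambda>x. Phi (gL L x))" by (rule gL_int[OF Lss[OF L]])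
    have i1: "integrable M (\<lambda>x. Phi (cc U x - gL L x))"
      by (rule integrable_Phi_diff[OF GG_D(4)[OF U] gm GG_D(5)[OF U] gi])
    have i2: "integrable M (\<lambda>x. Phi (gL L x - cc V x))"
      by (rule integrable_Phi_diff[OF gm GG_D(4)[OF V] gi GG_D(5)[OF V]])
    have sw: "(\<lambda>x. Phi (gL L x - cc V x)) = (\<lambda>x. Phi (cc V x - gL L x))"
      by (rule ext) (metis Phi_minus minus_diff_eq)
    have "dd U V \<le> (\<integral>x. Phi (cc U x - gL L x) + Phi (gL L x - cc V x) \<partial>M)"
      unfolding dd_def'
      by (rule integral_mono[OF GG_integrable_d[OF U V] Bochner_Integration.integrable_add[OF i1 i2]])
        (rule Phi_tri)
    also have "\<dots> = (\<integral>x. Phi (cc U x - gL L x) \<partial>M) + (\<integral>x. Phi (gL L x - cc V x) \<partial>M)"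
      by (rule Bochner_Integration.integral_add[OF i1 i2])
    also have "\<dots> < e" using Lb Vb q sw by simp
    finally show ?thesis using VD by blast
  qed
  show ?thesis using DG cD dense by blast
qed

end

theorem mainTheorem9:
  fixes M :: "'a::polish_space measure" and \<phi> :: "real \<Rightarrow> real" and T :: "'a \<Rightarrow> 'a"
  assumes "std_atomless_prob M"
    and "metric_compatible \<phi>"
    and "aut M T" and "aperiodic M T"
  defines "G \<equiv> full_group_phi M \<phi> T" and "d \<equiv> d_phi M \<phi> T"
  shows
    \<comment> \<open>subgroup of Aut(X,mu)\<close>
    "(\<forall>U\<in>G. aut M U) \<and> id \<in> G \<and> (\<forall>U\<in>G. \<forall>V\<in>G. U \<circ> V \<in> G) \<and> (\<forall>U\<in>G. inv U \<in> G)
    \<comment> \<open>membership depends only on the class modulo null sets\<close>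
    \<and> (\<forall>U\<in>G. \<forall>V. aut M V \<and> aut_eq M U V \<longrightarrow> V \<in> G)
    \<comment> \<open>d is a metric on G modulo null sets\<close>
    \<and> (\<forall>U\<in>G. \<forall>V\<in>G. d U V \<ge> 0 \<and> (d U V = 0 \<longleftrightarrow> aut_eq M U V) \<and> d U V = d V U)
    \<and> (\<forall>U\<in>G. \<forall>V\<in>G. \<forall>W\<in>G. d U W \<le> d U V + d V W)
    \<comment> \<open>right invariance\<close>
    \<and> (\<forall>U\<in>G. \<forall>V\<in>G. \<forall>W\<in>G. d (U \<circ> W) (V \<circ> W) = d U V)
    \<comment> \<open>completeness\<close>
    \<and> (\<forall>S. (\<forall>n. S n \<in> G) \<and> (\<forall>e>0. \<exists>N. \<forall>m\<ge>N. \<forall>n\<ge>N. d (S m) (S n) < e)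
          \<longrightarrow> (\<exists>U\<in>G. (\<lambda>n. d (S n) U) \<longlonglongrightarrow> 0))
    \<comment> \<open>separability\<close>
    \<and> (\<exists>D\<subseteq>G. countable D \<and> (\<forall>U\<in>G. \<forall>e>0. \<exists>V\<in>D. d U V < e))
    \<comment> \<open>group topology: multiplication and inversion are (sequentially) continuous\<close>
    \<and> (\<forall>S R U V. (\<forall>n. S n \<in> G \<and> R n \<in> G) \<and> U \<in> G \<and> V \<in> G
          \<and> (\<lambda>n. d (S n) U) \<longlonglongrightarrow> 0 \<and> (\<lambda>n. d (R n) V) \<longlonglongrightarrow> 0
          \<longrightarrow> (\<lambda>n. d (S n \<circ> R n) (U \<circ> V)) \<longlonglongrightarrow> 0 \<and> (\<lambda>n. d (inv (S n)) (inv U)) \<longlonglongrightarrow> 0)"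
proof -
  interpret fgs M \<phi> T using assms(1-4) by unfold_locales
  have G: "G = GG" using assms(5) by simp
  have d: "d = dd" using assms(6) by simp
  have c1: "\<forall>U\<in>GG. aut M U" using GG_D(1) by blast
  have c2: "id \<in> GG" by (rule id_GG)
  have c3: "\<forall>U\<in>GG. \<forall>V\<in>GG. U \<circ> V \<in> GG" using comp_GG by blast
  have c4: "\<forall>U\<in>GG. inv U \<in> GG" using inv_GG by blast
  have c5: "\<forall>U\<in>GG. \<forall>V. aut M V \<and> aut_eq M U V \<longrightarrow> V \<in> GG" using eq_GG by blast
  have c6: "\<forall>U\<in>GG. \<forall>V\<in>GG. dd U V \<ge> 0 \<and> (dd U V = 0 \<longleftrightarrow> aut_eq M U V) \<and> dd U V = dd V U"
    using dd_nonneg dd_zero dd_sym by blast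
  have c7: "\<forall>U\<in>GG. \<forall>V\<in>GG. \<forall>W\<in>GG. dd U W \<le> dd U V + dd V W" using dd_tri by blast
  have c8: "\<forall>U\<in>GG. \<forall>V\<in>GG. \<forall>W\<in>GG. dd (U \<circ> W) (V \<circ> W) = dd U V" using dd_rinv by blast
  have c9: "\<forall>S. (\<forall>n. S n \<in> GG) \<and> (\<forall>e>0. \<exists>N. \<forall>m\<ge>N. \<forall>n\<ge>N. dd (S m) (S n) < e)
          \<longrightarrow> (\<exists>U\<in>GG. (\<lambda>n. dd (S n) U) \<longlonglongrightarrow> 0)"
    using complete_GG by blast
  have c10: "\<exists>D\<subseteq>GG. countable D \<and> (\<forall>U\<in>GG. \<forall>e>0. \<exists>V\<in>D. dd U V < e)" by (rule separable_GG)
  have c11: "\<forall>S R U V. (\<forall>n. S n \<in> GG \<and> R n \<in> GG) \<and> U \<in> GG \<and> V \<in> GG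
          \<and> (\<lambda>n. dd (S n) U) \<longlonglongrightarrow> 0 \<and> (\<lambda>n. dd (R n) V) \<longlonglongrightarrow> 0
          \<longrightarrow> (\<lambda>n. dd (S n \<circ> R n) (U \<circ> V)) \<longlonglongrightarrow> 0 \<and> (\<lambda>n. dd (inv (S n)) (inv U)) \<longlonglongrightarrow> 0"
  proof (intro allI impI conjI)
    fix S R U V
    assume h: "(\<forall>n. S n \<in> GG \<and> R n \<in> GG) \<and> U \<in> GG \<and> V \<in> GG
          \<and> (\<lambda>n. dd (S n) U) \<longlonglongrightarrow> 0 \<and> (\<lambda>n. dd (R n) V) \<longlonglongrightarrow> 0"
    then have S: "\<And>n. S n \<in> GG" and R: "\<And>n. R n \<in> GG" by auto
    show "(\<lambda>n. dd (S n \<circ> R n) (U \<circ> V)) \<longlonglongrightarrow> 0" using h by (intro mult_cont[OF S R]) auto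
    show "(\<lambda>n. dd (inv (S n)) (inv U)) \<longlonglongrightarrow> 0" using h by (intro inv_cont[OF S]) auto
  qed
  show ?thesis unfolding G d using c1 c2 c3 c4 c5 c6 c7 c8 c9 c10 c11 by blast
qed

end
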